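(* Let $c_k\in(0,1)$, $l_k>0$ decreasing to $0$, $I_k$ the open interval of length $l_k$ centered at $c_k$, and assume (A1), (A2), (A3) below, with $q(n)$ the sequence appearing there. Let $f$ be a positive continuous function on $[0,1]$, $\mu_k=\frac{1}{|I_k|}f(x)\,dx|_{I_k}$ (with $dx$ Lebesgue measure restricted to $[0,1]$), $\mu_{\mathcal{A}_n}=\frac{1}{\#\mathcal{A}_n}\sum_{k\in\mathcal{A}_n}\mu_k$, $V_n=\bigcup_{k\in\mathcal{A}_n}I_k$, $\hat\mu_n=\mu_{\mathcal{A}_n}/\mu_{\mathcal{A}_n}(V_n)$, and $\mathcal{B}_m=\{0,\dots,q(m)-1\}$. Then, as $m\to\infty$, $$\frac{1}{(\#\mathcal{B}_m)^2}\sum_{s,t\in\mathcal{B}_m,\,s\ne t}I(\hat\mu_{2^sm},\hat\mu_{2^tm})\to\frac{I(f(x)\phi(x)\,dx)}{\left(\int_0^1 f\phi\,dx\right)^2}.$$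
   Context: $I(\nu,\mu)=\iint(-\log|z-w|)\,d\nu(z)\,d\mu(w)$, $I(\mu)=I(\mu,\mu)$. Notation: $\mathcal{A}_n=\{n,\dots,2n-1\}$, $\mathcal{A}_{n,q}=\mathcal{A}_n\cup\mathcal{A}_{2n}\cup\cdots\cup\mathcal{A}_{2^qn}$. (A1) There is $\phi\in L^1([0,1],dx)$, $\phi>0$ a.e., with $\frac{1}{\#\mathcal{A}_n}\sum_{k\in\mathcal{A}_n}g(c_k)\to\int_0^1 g\phi\,dx$ for every $g\in C([0,1])$; $\phi$ in the claim is this function. There are integers $q(n)\to\infty$ such that: (A2) for every $\varepsilon>0$ there is $\delta>0$ such that for all large $n$ and all $n',n''\in\{n,2n,\dots,2^{q(n)}n\}$, $\frac{1}{\#(\mathcal{A}_{n'}\times\mathcal{A}_{n''})}\sum_{i\in\mathcal{A}_{n'},j\in\mathcal{A}_{n''},\,i\neq j,\,|c_i-c_j|<\delta}(-\log|c_i-c_j|)<\varepsilon$; (A3) for every $\varepsilon>0$, for all large $n$ and all $i\ne j$ in $\mathcal{A}_{n,q(n)}$, $\frac{l_i+l_j}{2|c_i-c_j|}<\varepsilon$. *)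

theory Defs
  imports "HOL-Analysis.Analysis"
begin

definition blockA :: "nat \<Rightarrow> nat set" where
  "blockA n = {n..<2*n}"

definition blockAq :: "nat \<Rightarrow> nat \<Rightarrow> nat set" where
  "blockAq n q = (\<Union>a\<le>q. blockA (2^a * n))"

definition interv :: "(nat \<Rightarrow> real) \<Rightarrow> (nat \<Rightarrow> real) \<Rightarrow> nat \<Rightarrow> real set" where
  "interv c l k = {c k - l k / 2 <..< c k + l k / 2}"

text \<open>Logarithmic mutual energy I(nu,mu) = double integral of -log|z-w|.
  All measures used below live on [0,1], where the kernel is nonnegative,
  so the nonnegative (ennreal-valued) integral is used.\<close>
definition log_energy :: "real measure \<Rightarrow> real measure \<Rightarrow> ennreal" where
  "log_energy \<nu> \<mu> = (\<integral>\<^sup>+ z. (\<integral>\<^sup>+ w. ennreal (- ln \<bar>z - w\<bar>) \<partial>\<mu>) \<partial>\<nu>)"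

definition densA :: "(nat \<Rightarrow> real) \<Rightarrow> (nat \<Rightarrow> real) \<Rightarrow> (real \<Rightarrow> real) \<Rightarrow> nat \<Rightarrow> real \<Rightarrow> real" where
  "densA c l f n x = (1 / real (card (blockA n))) *
     (\<Sum>k\<in>blockA n. f x / l k * indicator (interv c l k \<inter> {0..1}) x)"

definition muA :: "(nat \<Rightarrow> real) \<Rightarrow> (nat \<Rightarrow> real) \<Rightarrow> (real \<Rightarrow> real) \<Rightarrow> nat \<Rightarrow> real measure" where
  "muA c l f n = density lborel (\<lambda>x. ennreal (densA c l f n x))"

definition Vset :: "(nat \<Rightarrow> real) \<Rightarrow> (nat \<Rightarrow> real) \<Rightarrow> nat \<Rightarrow> real set" where
  "Vset c l n = (\<Union>k\<in>blockA n. interv c l k)"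

definition muhat :: "(nat \<Rightarrow> real) \<Rightarrow> (nat \<Rightarrow> real) \<Rightarrow> (real \<Rightarrow> real) \<Rightarrow> nat \<Rightarrow> real measure" where
  "muhat c l f n = density lborel
     (\<lambda>x. ennreal (densA c l f n x) / emeasure (muA c l f n) (Vset c l n))"

end

theory Submission
  imports Defs
begin


locale Lset =
  fixes c l :: "nat \<Rightarrow> real" and \<phi> f :: "real \<Rightarrow> real" and q :: "nat \<Rightarrow> nat"
  assumes c_in: "\<forall>k\<ge>1. c k \<in> {0<..<1}"
    and l_pos: "\<forall>k\<ge>1. l k > 0"
    and l_decr: "\<forall>k\<ge>1. l (Suc k) \<le> l k"
    and l_lim: "l \<longlonglongrightarrow> 0"
    and A1_int: "set_integrable lborel {0..1} \<phi>"
    and A1_pos: "AE x in lborel. x \<in> {0..1} \<longrightarrow> \<phi> x > 0"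
    and A1_lim: "\<forall>g. continuous_on {0..1} g \<longrightarrow>
        (\<lambda>n. (1 / real (card (blockA n))) * (\<Sum>k\<in>blockA n. g (c k)))
          \<longlonglongrightarrow> (LINT x:{0..1}|lborel. g x * \<phi> x)"
    and q_lim: "filterlim q at_top sequentially"
    and A2: "\<forall>\<epsilon>>0. \<exists>\<delta>>0. \<forall>\<^sub>F n in sequentially. \<forall>a\<le>q n. \<forall>b\<le>q n.
        (1 / real (card (blockA (2^a*n) \<times> blockA (2^b*n)))) *
        (\<Sum>i\<in>blockA (2^a*n). \<Sum>j\<in>{j\<in>blockA (2^b*n). i \<noteq> j \<and> \<bar>c i - c j\<bar> < \<delta>}.
            - ln \<bar>c i - c j\<bar>) < \<epsilon>"
    and A3: "\<forall>\<epsilon>>0. \<forall>\<^sub>F n in sequentially. \<forall>i\<in>blockAq n (q n). \<forall>j\<in>blockAq n (q n).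
        i \<noteq> j \<longrightarrow> l i + l j < \<epsilon> * (2 * \<bar>c i - c j\<bar>)"
    and f_cont: "continuous_on {0..1} f"
    and f_pos: "\<forall>x\<in>{0..1}. f x > 0"
begin

definition ph :: "real \<Rightarrow> real" where
  "ph x = max 0 (indicator {0..1} x * \<phi> x)"

definition ff :: "real \<Rightarrow> real" where
  "ff x = f (max 0 (min 1 x))"

definition avg :: "nat \<Rightarrow> (real \<Rightarrow> real) \<Rightarrow> real" where
  "avg n g = (1 / real (card (blockA n))) * (\<Sum>k\<in>blockA n. g (c k))"

lemma phi_meas: "(\<lambda>x. indicator {0..1} x * \<phi> x) \<in> borel_measurable lborel"
  using A1_int unfolding set_integrable_def by (auto dest: borel_measurable_integrable)

lemma phi_int: "integrable lborel (\<lambda>x. indicator {0..1} x * \<phi> x)"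
  using A1_int unfolding set_integrable_def by simp

lemma ph_meas[measurable]: "ph \<in> borel_measurable lborel"
  unfolding ph_def using phi_meas by measurable

lemma ph_nonneg: "0 \<le> ph x"
  by (simp add: ph_def)

lemma ph_out: "x \<notin> {0..1} \<Longrightarrow> ph x = 0"
  by (simp add: ph_def)

lemma ph_int: "integrable lborel ph"
  by (rule Bochner_Integration.integrable_bound[OF phi_int]) (auto simp: ph_def)

lemma ph_ae: "AE x in lborel. indicator {0..1} x * \<phi> x = ph x"
  using A1_pos by eventually_elim (auto simp: ph_def indicator_def)

lemma ff_cont: "continuous_on UNIV ff"
proof -
  have "continuous_on UNIV (\<lambda>x::real. max 0 (min 1 x))"
    by (intro continuous_intros)
  moreover have "(\<lambda>x::real. max 0 (min 1 x)) ` UNIV \<subseteq> {0..1}" by auto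
  ultimately show ?thesis unfolding ff_def
    using continuous_on_compose2[OF f_cont] by blast
qed

lemma ff_eq: "x \<in> {0..1} \<Longrightarrow> ff x = f x"
  by (simp add: ff_def)

lemma ff_pos: "0 < ff x"
  using f_pos by (simp add: ff_def)

lemma ff_meas[measurable]: "ff \<in> borel_measurable borel"
  using ff_cont by (simp add: borel_measurable_continuous_onI)

lemma ff_bounds: "\<exists>b a. 0 < a \<and> (\<forall>x. a \<le> ff x \<and> ff x \<le> b)"
proof -
  have cmp: "compact (ff ` {0..1})"
    using ff_cont by (intro compact_continuous_image) (auto intro: continuous_on_subset)
  obtain x0 where x0: "x0 \<in> {0..1}" "\<forall>y\<in>{0..1}. ff x0 \<le> ff y"
    using continuous_attains_inf[of "{0..1::real}" ff] continuous_on_subset[OF ff_cont, of "{0..1}"] by force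
  obtain x1 where x1: "x1 \<in> {0..1}" "\<forall>y\<in>{0..1}. ff y \<le> ff x1"
    using continuous_attains_sup[of "{0..1::real}" ff] continuous_on_subset[OF ff_cont, of "{0..1}"] by force
  have "\<forall>x. ff x0 \<le> ff x \<and> ff x \<le> ff x1"
  proof
    fix x
    have "max 0 (min 1 x) \<in> {0..1::real}" by simp
    moreover have "ff x = ff (max 0 (min 1 x))" by (simp add: ff_def)
    ultimately show "ff x0 \<le> ff x \<and> ff x \<le> ff x1" using x0 x1 by metis
  qed
  then show ?thesis using ff_pos by blast
qed

definition FB where "FB = (SOME b. \<exists>a. 0 < a \<and> (\<forall>x. a \<le> ff x \<and> ff x \<le> b))"
definition Fm where "Fm = (SOME a. 0 < a \<and> (\<forall>x. a \<le> ff x \<and> ff x \<le> FB))"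

lemma FB_Fm: "0 < Fm" "ff x \<le> FB" "Fm \<le> ff x"
proof -
  have "\<exists>a. 0 < a \<and> (\<forall>x. a \<le> ff x \<and> ff x \<le> FB)"
    unfolding FB_def using someI_ex[OF ff_bounds] .
  then have "0 < Fm \<and> (\<forall>x. Fm \<le> ff x \<and> ff x \<le> FB)"
    unfolding Fm_def by (rule someI_ex)
  then show "0 < Fm" "ff x \<le> FB" "Fm \<le> ff x" by auto
qed

lemma FB_pos: "0 < FB"
  using FB_Fm(1)[of] FB_Fm(2)[of 0] FB_Fm(3)[of 0] by linarith

lemma cont_ind_meas:
  assumes "continuous_on {0..1} g"
  shows "(\<lambda>x. g x * ph x) \<in> borel_measurable lborel"
proof -
  have m: "(\<lambda>x. indicator {0..1::real} x *\<^sub>R g x) \<in> borel_measurable borel"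
    by (rule borel_measurable_continuous_on_indicator) (use assms in auto)
  have "(\<lambda>x. g x * ph x) = (\<lambda>x. (indicator {0..1::real} x *\<^sub>R g x) * ph x)"
  proof
    fix x show "g x * ph x = (indicator {0..1::real} x *\<^sub>R g x) * ph x"
      by (cases "x \<in> {0..1}") (auto simp: ph_out)
  qed
  then show ?thesis using m by simp
qed

lemma cont_bounded01:
  fixes g :: "real \<Rightarrow> real"
  assumes "continuous_on {0..1} g"
  shows "\<exists>B. \<forall>x\<in>{0..1::real}. \<bar>g x\<bar> \<le> B"
proof -
  have "compact (g ` {0..1})" using assms by (intro compact_continuous_image) auto
  then have "bounded (g ` {0..1})" by (rule compact_imp_bounded)
  then show ?thesis unfolding bounded_iff by auto
qed

lemma cont_int:
  assumes "continuous_on {0..1} g"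
  shows "integrable lborel (\<lambda>x. g x * ph x)"
proof -
  obtain B where B: "\<forall>x\<in>{0..1::real}. \<bar>g x\<bar> \<le> B" using cont_bounded01[OF assms] by blast
  show ?thesis
  proof (rule Bochner_Integration.integrable_bound[where f="\<lambda>x. B * ph x"])
    show "integrable lborel (\<lambda>x. B * ph x)" using ph_int by simp
    show "(\<lambda>x. g x * ph x) \<in> borel_measurable lborel" by (rule cont_ind_meas[OF assms])
    show "AE x in lborel. norm (g x * ph x) \<le> norm (B * ph x)"
    proof (intro AE_I2)
      fix x show "norm (g x * ph x) \<le> norm (B * ph x)"
      proof (cases "x \<in> {0..1}")
        case True
        then have "\<bar>g x\<bar> \<le> B" using B by auto
        then show ?thesis using ph_nonneg[of x]
          by (simp add: abs_mult mult_right_mono)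
      qed (simp add: ph_out)
    qed
  qed
qed

lemma LINT_conv:
  assumes "continuous_on {0..1} g"
  shows "(LINT x:{0..1}|lborel. g x * \<phi> x) = (\<integral>x. g x * ph x \<partial>lborel)"
proof -
  have m1: "(\<lambda>x. indicator {0..1::real} x *\<^sub>R g x) \<in> borel_measurable borel"
    by (rule borel_measurable_continuous_on_indicator) (use assms in auto)
  have "(LINT x:{0..1}|lborel. g x * \<phi> x) = (\<integral>x. (indicator {0..1} x *\<^sub>R g x) * (indicator {0..1} x * \<phi> x) \<partial>lborel)"
    unfolding set_lebesgue_integral_def
    by (rule Bochner_Integration.integral_cong) (auto simp: indicator_def)
  also have "\<dots> = (\<integral>x. g x * ph x \<partial>lborel)"
  proof (rule integral_cong_AE)
    show "(\<lambda>x. (indicator {0..1} x *\<^sub>R g x) * (indicator {0..1} x * \<phi> x)) \<in> borel_measurable lborel"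
      using m1 phi_meas by measurable
    show "(\<lambda>x. g x * ph x) \<in> borel_measurable lborel" by (rule cont_ind_meas[OF assms])
    show "AE x in lborel. indicator {0..1} x *\<^sub>R g x * (indicator {0..1} x * \<phi> x) = g x * ph x"
      using ph_ae by eventually_elim (auto simp: indicator_def ph_def)
  qed
  finally show ?thesis .
qed

lemma A1': "continuous_on {0..1} g \<Longrightarrow> (\<lambda>n. avg n g) \<longlonglongrightarrow> (\<integral>x. g x * ph x \<partial>lborel)"
  using A1_lim LINT_conv unfolding avg_def by metis

end



inductive sep :: "(real \<times> real \<Rightarrow> real) \<Rightarrow> bool" where
  sp: "continuous_on UNIV a \<Longrightarrow> continuous_on UNIV b \<Longrightarrow> sep (\<lambda>p. a (fst p) * b (snd p))"
| sa: "sep g \<Longrightarrow> sep h \<Longrightarrow> sep (\<lambda>p. g p + h p)"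

lemma sep_mult: "sep g \<Longrightarrow> sep h \<Longrightarrow> sep (\<lambda>p. g p * h p)"
proof (induction g arbitrary: h rule: sep.induct)
  case (sp a b)
  from sp.prems show ?case
  proof (induction h rule: sep.induct)
    case (sp a' b')
    have "sep (\<lambda>p. (\<lambda>x. a x * a' x) (fst p) * (\<lambda>y. b y * b' y) (snd p))"
      by (rule sep.sp) (use sp.hyps \<open>continuous_on UNIV a\<close> \<open>continuous_on UNIV b\<close> in \<open>auto intro: continuous_intros\<close>)
    then show ?case by (simp add: algebra_simps)
  next
    case (sa g h)
    have "sep (\<lambda>p. (a (fst p) * b (snd p) * g p) + (a (fst p) * b (snd p) * h p))"
      using sa by (intro sep.sa)
    then show ?case by (simp add: algebra_simps)
  qed
next
  case (sa g1 g2)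
  have "sep (\<lambda>p. g1 p * h p + g2 p * h p)" using sa by (intro sep.sa) auto
  then show ?case by (simp add: algebra_simps)
qed

lemma sep_cont: "sep g \<Longrightarrow> continuous_on UNIV g"
proof (induction rule: sep.induct)
  case (sp a b)
  have "continuous_on UNIV (\<lambda>p::real\<times>real. a (fst p))"
    by (rule continuous_on_compose2[OF sp(1)]) (auto intro: continuous_intros)
  moreover have "continuous_on UNIV (\<lambda>p::real\<times>real. b (snd p))"
    by (rule continuous_on_compose2[OF sp(2)]) (auto intro: continuous_intros)
  ultimately show ?case by (intro continuous_intros)
qed (auto intro: continuous_intros)

lemma poly_sep: "real_polynomial_function g \<Longrightarrow> sep g"
proof (induction rule: real_polynomial_function.induct)
  case (linear h)
  have e: "h p = h (fst p, 0) * 1 + 1 * h (0, snd p)" for p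
  proof -
    have "p = (fst p, 0) + (0, snd p)" by simp
    then have "h p = h ((fst p, 0) + (0, snd p))" by metis
    also have "\<dots> = h (fst p, 0) + h (0, snd p)" using linear linear_add bounded_linear.linear by blast
    finally show ?thesis by simp
  qed
  have ch: "continuous_on UNIV h" using linear_continuous_on[OF linear] .
  have i1: "continuous_on UNIV (\<lambda>x::real. (x, 0::real))" by (intro continuous_intros)
  have i2: "continuous_on UNIV (\<lambda>x::real. (0::real, x))" by (intro continuous_intros)
  have c1: "continuous_on UNIV (\<lambda>x::real. h (x, 0))"
    using continuous_on_compose2[OF ch i1] by simp
  have c2: "continuous_on UNIV (\<lambda>x::real. h (0, x))"
    using continuous_on_compose2[OF ch i2] by simp
  have e': "h = (\<lambda>p. (\<lambda>x. h (x, 0)) (fst p) * (\<lambda>_. 1) (snd p) + (\<lambda>_. 1) (fst p) * (\<lambda>y. h (0, y)) (snd p))"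
    by (rule ext) (rule e)
  show ?case
    by (subst e') (intro sep.sa sep.sp c1 c2 continuous_intros)
next
  case (const c)
  have "sep (\<lambda>p. (\<lambda>_. c) (fst p) * (\<lambda>_. 1) (snd p))" by (intro sep.sp continuous_intros)
  then show ?case by simp
next
  case (add f g) show ?case by (rule sep.sa[OF add.IH])
next
  case (mult f g) show ?case by (rule sep_mult[OF mult.IH])
qed

lemma cont2_meas: "continuous_on UNIV (G :: real \<times> real \<Rightarrow> real) \<Longrightarrow> G \<in> borel_measurable (lborel \<Otimes>\<^sub>M lborel)"
  by (simp add: lborel_prod borel_measurable_continuous_onI)

context Lset begin

definition D :: "nat \<Rightarrow> nat \<Rightarrow> (real \<times> real \<Rightarrow> real) \<Rightarrow> real" where
  "D n1 n2 G = (1 / (real (card (blockA n1)) * real (card (blockA n2)))) *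
      (\<Sum>i\<in>blockA n1. \<Sum>j\<in>blockA n2. G (c i, c j))"

definition J :: "(real \<times> real \<Rightarrow> real) \<Rightarrow> real" where
  "J G = (\<integral>x. ph x * (\<integral>y. G (x, y) * ph y \<partial>lborel) \<partial>lborel)"

definition Q :: "(real \<times> real \<Rightarrow> real) \<Rightarrow> bool" where
  "Q G \<longleftrightarrow> ((\<lambda>p. D (fst p) (snd p) G) \<longlongrightarrow> J G) (sequentially \<times>\<^sub>F sequentially)"

definition P where "P = (\<integral>x. ph x \<partial>lborel)"

lemma P_nonneg: "0 \<le> P" unfolding P_def by (simp add: ph_nonneg)

lemma cont_sec1:
  assumes "continuous_on UNIV (G :: real \<times> real \<Rightarrow> real)"
  shows "continuous_on S (\<lambda>y. G (x, y))"
proof -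
  have i: "continuous_on S (\<lambda>y::real. (x, y))" by (intro continuous_intros)
  show ?thesis using continuous_on_compose2[OF assms i] by simp
qed

lemma inner_int: "continuous_on UNIV (G :: real \<times> real \<Rightarrow> real) \<Longrightarrow> integrable lborel (\<lambda>y. G (x, y) * ph y)"
  by (rule cont_int) (rule cont_sec1)

lemma bounded_sq:
  assumes "continuous_on UNIV (G :: real \<times> real \<Rightarrow> real)"
  shows "\<exists>B. \<forall>x\<in>{0..1}. \<forall>y\<in>{0..1}. \<bar>G (x, y)\<bar> \<le> B"
proof -
  have "compact (G ` ({0..1} \<times> {0..1}))"
    using assms by (intro compact_continuous_image compact_Times) (auto intro: continuous_on_subset)
  then have "bounded (G ` ({0..1} \<times> {0..1}))" by (rule compact_imp_bounded)
  then obtain B where "\<forall>z\<in>G ` ({0..1} \<times> {0..1}). norm z \<le> B" unfolding bounded_iff by blast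
  then show ?thesis by force
qed

lemma inner_bound:
  fixes G H :: "real \<times> real \<Rightarrow> real"
  assumes "\<forall>y\<in>{0..1}. \<bar>G (x, y)\<bar> \<le> B" "continuous_on UNIV G"
  shows "\<bar>\<integral>y. G (x, y) * ph y \<partial>lborel\<bar> \<le> B * P"
proof -
  have "norm (\<integral>y. G (x, y) * ph y \<partial>lborel) \<le> (\<integral>y. B * ph y \<partial>lborel)"
  proof (rule Bochner_Integration.integral_norm_bound_integral)
    show "integrable lborel (\<lambda>y. G (x, y) * ph y)" by (rule inner_int[OF assms(2)])
    show "integrable lborel (\<lambda>y. B * ph y)" using ph_int by simp
    fix y show "norm (G (x, y) * ph y) \<le> B * ph y"
    proof (cases "y \<in> {0..1}")
      case True then show ?thesis using assms(1) ph_nonneg[of y]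
        by (simp add: abs_mult mult_right_mono)
    qed (simp add: ph_out)
  qed
  then show ?thesis unfolding P_def by simp
qed

lemma inner_meas:
  fixes G H :: "real \<times> real \<Rightarrow> real"
  assumes "continuous_on UNIV G"
  shows "(\<lambda>x. \<integral>y. G (x, y) * ph y \<partial>lborel) \<in> borel_measurable lborel"
proof -
  have [measurable]: "G \<in> borel_measurable (lborel \<Otimes>\<^sub>M lborel)" by (rule cont2_meas[OF assms])
  have "(\<lambda>p. G p * ph (snd p)) \<in> borel_measurable (lborel \<Otimes>\<^sub>M lborel)" by measurable
  then have "case_prod (\<lambda>x y. G (x, y) * ph y) \<in> borel_measurable (lborel \<Otimes>\<^sub>M lborel)"
    by (simp add: case_prod_beta')
  then show ?thesis by (rule lborel.borel_measurable_lebesgue_integral)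
qed

lemma outer_int:
  fixes G H :: "real \<times> real \<Rightarrow> real"
  assumes "continuous_on UNIV G"
  shows "integrable lborel (\<lambda>x. ph x * (\<integral>y. G (x, y) * ph y \<partial>lborel))"
proof -
  obtain B where B: "\<forall>x\<in>{0..1}. \<forall>y\<in>{0..1}. \<bar>G (x, y)\<bar> \<le> B" using bounded_sq[OF assms] by blast
  show ?thesis
  proof (rule Bochner_Integration.integrable_bound[where f="\<lambda>x. (B * P) * ph x"])
    show "integrable lborel (\<lambda>x. (B * P) * ph x)" using ph_int by simp
    show "(\<lambda>x. ph x * (\<integral>y. G (x, y) * ph y \<partial>lborel)) \<in> borel_measurable lborel"
      using inner_meas[OF assms] by measurable
    show "AE x in lborel. norm (ph x * (\<integral>y. G (x, y) * ph y \<partial>lborel)) \<le> norm ((B * P) * ph x)"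
    proof (intro AE_I2)
      fix x show "norm (ph x * (\<integral>y. G (x, y) * ph y \<partial>lborel)) \<le> norm ((B * P) * ph x)"
      proof (cases "x \<in> {0..1}")
        case True
        then have "\<bar>\<integral>y. G (x, y) * ph y \<partial>lborel\<bar> \<le> B * P" using B inner_bound[OF _ assms] by blast
        then have "ph x * \<bar>\<integral>y. G (x, y) * ph y \<partial>lborel\<bar> \<le> ph x * (B * P)"
          using ph_nonneg[of x] by (rule mult_left_mono)
        also have "\<dots> \<le> \<bar>B * P * ph x\<bar>" by (simp add: mult.commute)
        finally show ?thesis using ph_nonneg[of x] by (simp add: abs_mult)
      qed (simp add: ph_out)
    qed
  qed
qed

lemma J_add:
  fixes G H :: "real \<times> real \<Rightarrow> real"
  assumes "continuous_on UNIV G" "continuous_on UNIV H"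
  shows "J (\<lambda>p. G p + H p) = J G + J H"
proof -
  have "J (\<lambda>p. G p + H p) = (\<integral>x. ph x * (\<integral>y. G (x, y) * ph y \<partial>lborel) + ph x * (\<integral>y. H (x, y) * ph y \<partial>lborel) \<partial>lborel)"
    unfolding J_def
    by (rule Bochner_Integration.integral_cong)
       (auto simp: distrib_left distrib_right inner_int[OF assms(1)] inner_int[OF assms(2)])
  also have "\<dots> = J G + J H"
    unfolding J_def by (rule Bochner_Integration.integral_add[OF outer_int[OF assms(1)] outer_int[OF assms(2)]])
  finally show ?thesis .
qed

lemma J_diff:
  fixes G H :: "real \<times> real \<Rightarrow> real"
  assumes "continuous_on UNIV G" "continuous_on UNIV H"
  shows "J (\<lambda>p. G p - H p) = J G - J H"
proof -
  have "continuous_on UNIV (\<lambda>p. G p - H p)" using assms by (intro continuous_intros)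
  then have "J G = J (\<lambda>p. (G p - H p) + H p) " by simp
  also have "\<dots> = J (\<lambda>p. G p - H p) + J H" by (rule J_add) (use assms in \<open>auto intro: continuous_intros\<close>)
  finally show ?thesis by simp
qed

lemma J_bound:
  fixes G H :: "real \<times> real \<Rightarrow> real"
  assumes "continuous_on UNIV G" "\<forall>x\<in>{0..1}. \<forall>y\<in>{0..1}. \<bar>G (x, y)\<bar> \<le> B"
  shows "\<bar>J G\<bar> \<le> B * P * P"
proof -
  have "norm (J G) \<le> (\<integral>x. (B * P) * ph x \<partial>lborel)"
    unfolding J_def
  proof (rule Bochner_Integration.integral_norm_bound_integral)
    show "integrable lborel (\<lambda>x. ph x * (\<integral>y. G (x, y) * ph y \<partial>lborel))" by (rule outer_int[OF assms(1)])
    show "integrable lborel (\<lambda>x. (B * P) * ph x)" using ph_int by simp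
    fix x show "norm (ph x * (\<integral>y. G (x, y) * ph y \<partial>lborel)) \<le> (B * P) * ph x"
    proof (cases "x \<in> {0..1}")
      case True
      then have "\<bar>\<integral>y. G (x, y) * ph y \<partial>lborel\<bar> \<le> B * P" using assms(2) inner_bound[OF _ assms(1)] by blast
      then have "ph x * \<bar>\<integral>y. G (x, y) * ph y \<partial>lborel\<bar> \<le> ph x * (B * P)"
        using ph_nonneg[of x] by (rule mult_left_mono)
      then show ?thesis using ph_nonneg[of x] by (simp add: abs_mult mult.commute)
    qed (simp add: ph_out)
  qed
  then show ?thesis unfolding P_def by (simp add: mult.commute mult.left_commute)
qed

lemma J_prod:
  assumes "continuous_on UNIV a" "continuous_on UNIV b"
  shows "J (\<lambda>p. a (fst p) * b (snd p)) = (\<integral>x. a x * ph x \<partial>lborel) * (\<integral>y. b y * ph y \<partial>lborel)"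
proof -
  have "J (\<lambda>p. a (fst p) * b (snd p)) = (\<integral>x. (a x * ph x) * (\<integral>y. b y * ph y \<partial>lborel) \<partial>lborel)"
    unfolding J_def by (rule Bochner_Integration.integral_cong) (auto simp: mult.assoc mult.left_commute)
  also have "\<dots> = (\<integral>x. a x * ph x \<partial>lborel) * (\<integral>y. b y * ph y \<partial>lborel)" by simp
  finally show ?thesis .
qed

lemma D_add: "D n1 n2 (\<lambda>p. G p + H p) = D n1 n2 G + D n1 n2 H"
  unfolding D_def by (simp add: sum.distrib distrib_left)

lemma D_prod: "D n1 n2 (\<lambda>p. a (fst p) * b (snd p)) = avg n1 a * avg n2 b"
  unfolding D_def avg_def by (simp add: sum_product)

lemma Q_sep: "sep G \<Longrightarrow> Q G"
proof (induction rule: sep.induct)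
  case (sp a b)
  have "((\<lambda>p. avg (fst p) a * avg (snd p) b) \<longlongrightarrow> (\<integral>x. a x * ph x \<partial>lborel) * (\<integral>y. b y * ph y \<partial>lborel)) (sequentially \<times>\<^sub>F sequentially)"
  proof (rule tendsto_mult)
    show "((\<lambda>p. avg (fst p) a) \<longlongrightarrow> (\<integral>x. a x * ph x \<partial>lborel)) (sequentially \<times>\<^sub>F sequentially)"
      using filterlim_compose[OF A1'[of a] filterlim_fst] sp(1) by (auto intro: continuous_on_subset)
    show "((\<lambda>p. avg (snd p) b) \<longlongrightarrow> (\<integral>x. b x * ph x \<partial>lborel)) (sequentially \<times>\<^sub>F sequentially)"
      using filterlim_compose[OF A1'[of b] filterlim_snd] sp(2) by (auto intro: continuous_on_subset)
  qed
  then show ?case unfolding Q_def using J_prod[OF sp] D_prod by simp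
next
  case (sa g h)
  then show ?case unfolding Q_def D_add J_add[OF sep_cont[OF sa(1)] sep_cont[OF sa(2)]]
    by (intro tendsto_add)
qed

lemma D_close:
  assumes "n1 \<ge> 1" "n2 \<ge> 1" "\<forall>x\<in>{0..1}. \<forall>y\<in>{0..1}. \<bar>G (x, y) - H (x, y)\<bar> \<le> e"
  shows "\<bar>D n1 n2 G - D n1 n2 H\<bar> \<le> e"
proof -
  have cin: "c k \<in> {0..1}" if "k \<in> blockA n" "n \<ge> 1" for k n
  proof -
    have "k \<ge> 1" using that by (auto simp: blockA_def)
    then show ?thesis using c_in by auto
  qed
  have deq: "D n1 n2 G - D n1 n2 H = (1 / (real (card (blockA n1)) * real (card (blockA n2)))) *
      (\<Sum>i\<in>blockA n1. \<Sum>j\<in>blockA n2. G (c i, c j) - H (c i, c j))"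
    unfolding D_def by (simp add: sum_subtractf right_diff_distrib)
  have inner: "\<bar>\<Sum>i\<in>blockA n1. \<Sum>j\<in>blockA n2. G (c i, c j) - H (c i, c j)\<bar> \<le> (\<Sum>i\<in>blockA n1. \<Sum>j\<in>blockA n2. e)"
  proof -
    have "\<bar>\<Sum>i\<in>blockA n1. \<Sum>j\<in>blockA n2. G (c i, c j) - H (c i, c j)\<bar> \<le> (\<Sum>i\<in>blockA n1. \<bar>\<Sum>j\<in>blockA n2. G (c i, c j) - H (c i, c j)\<bar>)"
      by (rule sum_abs)
    also have "\<dots> \<le> (\<Sum>i\<in>blockA n1. \<Sum>j\<in>blockA n2. \<bar>G (c i, c j) - H (c i, c j)\<bar>)"
      by (intro sum_mono sum_abs)
    also have "\<dots> \<le> (\<Sum>i\<in>blockA n1. \<Sum>j\<in>blockA n2. e)"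
      by (intro sum_mono) (use assms cin in auto)
    finally show ?thesis .
  qed
  have "\<bar>(1 / (real (card (blockA n1)) * real (card (blockA n2)))) *
      (\<Sum>i\<in>blockA n1. \<Sum>j\<in>blockA n2. G (c i, c j) - H (c i, c j))\<bar> =
      (1 / (real (card (blockA n1)) * real (card (blockA n2)))) *
      \<bar>\<Sum>i\<in>blockA n1. \<Sum>j\<in>blockA n2. G (c i, c j) - H (c i, c j)\<bar>"
    by (simp add: abs_mult)
  also have "\<dots> \<le> (1 / (real (card (blockA n1)) * real (card (blockA n2)))) *
      (\<Sum>i\<in>blockA n1. \<Sum>j\<in>blockA n2. e)"
    by (rule mult_left_mono[OF inner]) simp
  also have "\<dots> \<le> e" using assms by (simp add: blockA_def)
  finally show ?thesis using deq by simp
qed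

lemma Q_cont:
  assumes G: "continuous_on UNIV G"
  shows "Q G"
  unfolding Q_def tendsto_iff
proof (intro allI impI)
  fix e :: real assume e: "e > 0"
  define e' where "e' = e / (3 + P * P)"
  have e': "e' > 0" unfolding e'_def using e P_nonneg by (simp add: add_pos_nonneg)
  obtain g where g: "real_polynomial_function g" "\<And>z. z \<in> {0..1} \<times> {0..1} \<Longrightarrow> \<bar>G z - g z\<bar> < e'"
    using Stone_Weierstrass_real_polynomial_function[of "{0..1::real} \<times> {0..1}" G e'] G e'
    by (auto intro: compact_Times continuous_on_subset)
  have sg: "sep g" by (rule poly_sep[OF g(1)])
  have cg: "continuous_on UNIV g" by (rule sep_cont[OF sg])
  have Qg: "Q g" by (rule Q_sep[OF sg])
  have ev1: "\<forall>\<^sub>F p in sequentially \<times>\<^sub>F sequentially. dist (D (fst p) (snd p) g) (J g) < e'"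
    using Qg e' unfolding Q_def tendsto_iff by blast
  have ev2: "\<forall>\<^sub>F p in sequentially \<times>\<^sub>F sequentially. fst p \<ge> 1 \<and> snd p \<ge> 1"
    unfolding eventually_prod_sequentially by auto
  have Jc: "\<bar>J G - J g\<bar> \<le> e' * P * P"
  proof -
    have "\<bar>J (\<lambda>p. G p - g p)\<bar> \<le> e' * P * P"
      by (rule J_bound) (use G cg g(2) in \<open>auto intro: continuous_intros less_imp_le\<close>)
    then show ?thesis using J_diff[OF G cg] by simp
  qed
  show "\<forall>\<^sub>F p in sequentially \<times>\<^sub>F sequentially. dist (D (fst p) (snd p) G) (J G) < e"
    using ev1 ev2
  proof eventually_elim
    case (elim p)
    have "\<bar>D (fst p) (snd p) G - D (fst p) (snd p) g\<bar> \<le> e'"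
      by (rule D_close) (use elim g(2) in \<open>auto intro: less_imp_le\<close>)
    then have "\<bar>D (fst p) (snd p) G - J G\<bar> < e' + e' + e' * P * P"
      using elim Jc by (simp add: dist_real_def)
    also have "\<dots> \<le> e"
    proof -
      have "e' + e' + e' * P * P = e' * (2 + P * P)" by (simp add: algebra_simps)
      also have "\<dots> \<le> e' * (3 + P * P)" using e' by simp
      also have "\<dots> = e"
      proof -
        have "3 + P * P > 0" using P_nonneg by (simp add: add_pos_nonneg)
        then show ?thesis unfolding e'_def by simp
      qed
      finally show ?thesis .
    qed
    finally show ?case by (simp add: dist_real_def)
  qed
qed

lemma Q_cont_ev:
  assumes "continuous_on UNIV G" "e > 0"
  shows "\<exists>N. \<forall>n1\<ge>N. \<forall>n2\<ge>N. \<bar>D n1 n2 G - J G\<bar> < e"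
proof -
  have "\<forall>\<^sub>F p in sequentially \<times>\<^sub>F sequentially. dist (D (fst p) (snd p) G) (J G) < e"
    using Q_cont[OF assms(1)] assms(2) unfolding Q_def tendsto_iff by blast
  then show ?thesis unfolding eventually_prod_sequentially by (auto simp: dist_real_def)
qed

end



lemma neg_ln_nonneg: "0 \<le> (x::real) \<Longrightarrow> x \<le> 1 \<Longrightarrow> 0 \<le> - ln x"
  by (cases "x = 0") auto

definition eta :: "nat \<Rightarrow> real" where "eta k = 1 / (real k + 1)"

lemma eta_pos: "0 < eta k" and eta_le1: "eta k \<le> 1"
  by (auto simp: eta_def)

lemma eta_mono: "k \<le> k' \<Longrightarrow> eta k' \<le> eta k"
  by (auto simp: eta_def frac_le)

lemma eta_small: "0 < d \<Longrightarrow> \<exists>K. \<forall>k\<ge>K. eta k \<le> d"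
proof -
  assume d: "0 < d"
  obtain K :: nat where K: "1 / d < K" using reals_Archimedean2 by blast
  have "eta k \<le> d" if "k \<ge> K" for k
  proof -
    have "1 / d < real k + 1" using K that by linarith
    then have "1 < d * (real k + 1)" using d by (simp add: field_simps)
    then show ?thesis unfolding eta_def using d by (simp add: field_simps)
  qed
  then show ?thesis by blast
qed

definition LK :: "nat \<Rightarrow> real \<times> real \<Rightarrow> real" where
  "LK k p = - ln (min 1 (max \<bar>fst p - snd p\<bar> (eta k)))"

lemma LK_arg_pos: "0 < min 1 (max \<bar>fst p - snd p\<bar> (eta k))"
  using eta_pos[of k] by auto

lemma LK_arg_ne: "min 1 (max \<bar>a - b\<bar> (eta k)) \<noteq> 0"
  using eta_pos[of k] by auto

lemma LK_cont: "continuous_on UNIV (LK k)"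
  unfolding LK_def
  by (intro continuous_intros) (simp add: LK_arg_ne)

lemma LK_nonneg: "0 \<le> LK k p"
  unfolding LK_def using LK_arg_pos[of p k] by (intro neg_ln_nonneg) auto

lemma LK_mono: "k \<le> k' \<Longrightarrow> LK k p \<le> LK k' p"
  unfolding LK_def using LK_arg_pos[of p k] LK_arg_pos[of p k'] eta_mono[of k k']
  by (auto simp: ln_le_cancel_iff)

lemma LK_le_log:
  assumes "x \<noteq> y" "\<bar>x - y\<bar> \<le> 1"
  shows "LK k (x, y) \<le> - ln \<bar>x - y\<bar>"
  unfolding LK_def using assms LK_arg_pos[of "(x,y)" k] by (auto simp: ln_le_cancel_iff)

lemma LK_eq_log:
  assumes "eta k \<le> \<bar>x - y\<bar>" "\<bar>x - y\<bar> \<le> 1"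
  shows "LK k (x, y) = - ln \<bar>x - y\<bar>"
  unfolding LK_def using assms by (simp add: max_def min_def)

lemma LK_diff:
  assumes "x \<noteq> y" "\<bar>x - y\<bar> \<le> 1" "k0 \<le> k"
  shows "LK k (x, y) - LK k0 (x, y) \<le> (if \<bar>x - y\<bar> < eta k0 then - ln \<bar>x - y\<bar> else 0)"
proof (cases "\<bar>x - y\<bar> < eta k0")
  case True
  then show ?thesis using LK_le_log[OF assms(1,2), of k] LK_nonneg[of k0 "(x,y)"] by simp
next
  case False
  then have "eta k \<le> \<bar>x - y\<bar>" using eta_mono[OF assms(3)] by linarith
  then show ?thesis using False LK_eq_log[of k0 x y] LK_eq_log[of k x y] assms by simp
qed

context Lset begin

definition GK :: "nat \<Rightarrow> real \<times> real \<Rightarrow> real" where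
  "GK k p = ff (fst p) * ff (snd p) * LK k p"

lemma GK_cont: "continuous_on UNIV (GK k)"
proof -
  have "continuous_on UNIV (\<lambda>p::real\<times>real. ff (fst p))"
    using continuous_on_compose2[OF ff_cont continuous_on_fst[OF continuous_on_id]] by simp
  moreover have "continuous_on UNIV (\<lambda>p::real\<times>real. ff (snd p))"
    using continuous_on_compose2[OF ff_cont continuous_on_snd[OF continuous_on_id]] by simp
  ultimately show ?thesis unfolding GK_def using LK_cont[of k]
    by (intro continuous_on_mult) auto
qed

lemma GK_nonneg: "0 \<le> GK k p"
  unfolding GK_def using ff_pos[of "fst p"] ff_pos[of "snd p"] LK_nonneg[of k p] by simp

lemma conv:
  fixes G :: "real \<times> real \<Rightarrow> real"
  assumes G: "continuous_on UNIV G" and nn: "\<And>p. 0 \<le> G p"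
  shows "(\<integral>\<^sup>+x. \<integral>\<^sup>+y. ennreal (ph x * ph y * G (x, y)) \<partial>lborel \<partial>lborel) = ennreal (J G)"
proof -
  have inner: "(\<integral>\<^sup>+y. ennreal (ph x * ph y * G (x, y)) \<partial>lborel) = ennreal (ph x * (\<integral>y. G (x, y) * ph y \<partial>lborel))" for x
  proof -
    have "(\<integral>\<^sup>+y. ennreal (ph x * ph y * G (x, y)) \<partial>lborel) = (\<integral>\<^sup>+y. ennreal (ph x * (G (x, y) * ph y)) \<partial>lborel)"
      by (simp add: mult_ac)
    also have "\<dots> = ennreal (\<integral>y. ph x * (G (x, y) * ph y) \<partial>lborel)"
      by (rule nn_integral_eq_integral) (use inner_int[OF G] ph_nonneg nn in \<open>auto\<close>)
    also have "\<dots> = ennreal (ph x * (\<integral>y. G (x, y) * ph y \<partial>lborel))" by simp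
    finally show ?thesis .
  qed
  have "(\<integral>\<^sup>+x. \<integral>\<^sup>+y. ennreal (ph x * ph y * G (x, y)) \<partial>lborel \<partial>lborel) =
        (\<integral>\<^sup>+x. ennreal (ph x * (\<integral>y. G (x, y) * ph y \<partial>lborel)) \<partial>lborel)"
    by (simp add: inner)
  also have "\<dots> = ennreal (J G)" unfolding J_def
  proof (rule nn_integral_eq_integral[OF outer_int[OF G]])
    show "AE x in lborel. 0 \<le> ph x * (\<integral>y. G (x, y) * ph y \<partial>lborel)"
      using ph_nonneg nn by (auto intro!: integral_nonneg_AE)
  qed
  finally show ?thesis .
qed

lemma J_GK_nonneg: "0 \<le> J (GK k)"
  unfolding J_def using ph_nonneg GK_nonneg
  by (intro integral_nonneg_AE AE_I2 mult_nonneg_nonneg integral_nonneg_AE) auto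

lemma J_GK_mono: "k \<le> k' \<Longrightarrow> J (GK k) \<le> J (GK k')"
proof -
  assume kk: "k \<le> k'"
  have "ennreal (J (GK k)) \<le> ennreal (J (GK k'))"
    unfolding conv[OF GK_cont GK_nonneg, symmetric]
  proof (intro nn_integral_mono ennreal_leI)
    fix x y
    show "ph x * ph y * GK k (x, y) \<le> ph x * ph y * GK k' (x, y)"
      unfolding GK_def using LK_mono[OF kk, of "(x,y)"] ph_nonneg[of x] ph_nonneg[of y] ff_pos[of x] ff_pos[of y]
      by (intro mult_left_mono) (auto intro: mult_nonneg_nonneg)
  qed
  then show ?thesis using J_GK_nonneg[of k'] by (simp add: ennreal_le_iff)
qed

definition I0 :: ennreal where
  "I0 = (\<integral>\<^sup>+x. \<integral>\<^sup>+y. ennreal (ph x * ph y * (ff x * ff y * - ln \<bar>x - y\<bar>)) \<partial>lborel \<partial>lborel)"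

lemma GK_meas[measurable]: "GK k \<in> borel_measurable (lborel \<Otimes>\<^sub>M lborel)"
  by (rule cont2_meas[OF GK_cont])

lemma I0_SUP: "I0 = (SUP k. ennreal (J (GK k)))"
proof -
  define g where "g k x y = ennreal (ph x * ph y * GK k (x, y))" for k x y
  have gmono: "g k x y \<le> g k' x y" if "k \<le> k'" for k k' x y
    unfolding g_def GK_def using LK_mono[OF that, of "(x,y)"] ph_nonneg[of x] ph_nonneg[of y] ff_pos[of x] ff_pos[of y]
    by (intro ennreal_leI mult_left_mono) (auto intro: mult_nonneg_nonneg)
  have ptw: "ennreal (ph x * ph y * (ff x * ff y * - ln \<bar>x - y\<bar>)) = (SUP k. g k x y)" if "y \<noteq> x" for x y
  proof (cases "x \<in> {0..1} \<and> y \<in> {0..1}")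
    case True
    then have d1: "\<bar>x - y\<bar> \<le> 1" by auto
    have dpos: "0 < \<bar>x - y\<bar>" using that by simp
    obtain K where K: "\<forall>k\<ge>K. eta k \<le> \<bar>x - y\<bar>" using eta_small[OF dpos] by blast
    show ?thesis
    proof (rule antisym)
      have "ennreal (ph x * ph y * (ff x * ff y * - ln \<bar>x - y\<bar>)) = g K x y"
        unfolding g_def GK_def using LK_eq_log[of K x y] K d1 by (simp add: mult_ac)
      then show "ennreal (ph x * ph y * (ff x * ff y * - ln \<bar>x - y\<bar>)) \<le> (SUP k. g k x y)"
        by (metis SUP_upper UNIV_I)
      show "(SUP k. g k x y) \<le> ennreal (ph x * ph y * (ff x * ff y * - ln \<bar>x - y\<bar>))"
      proof (rule SUP_least)
        fix k
        show "g k x y \<le> ennreal (ph x * ph y * (ff x * ff y * - ln \<bar>x - y\<bar>))"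
        proof -
          have "GK k (x, y) \<le> ff x * ff y * - ln \<bar>x - y\<bar>"
            unfolding GK_def fst_conv snd_conv using LK_le_log[of x y k] that d1 ff_pos[of x] ff_pos[of y]
            by (intro mult_left_mono) auto
          then have "ph x * ph y * GK k (x, y) \<le> ph x * ph y * (ff x * ff y * - ln \<bar>x - y\<bar>)"
            using ph_nonneg[of x] ph_nonneg[of y] by (intro mult_left_mono) auto
          then show ?thesis unfolding g_def by (rule ennreal_leI)
        qed
      qed
    qed
  next
    case False
    then have z: "ph x * ph y = 0" using ph_out by auto
    have "ennreal (ph x * ph y * (ff x * ff y * - ln \<bar>x - y\<bar>)) = 0" by (simp only: z) simp
    moreover have "g k x y = 0" for k unfolding g_def by (simp only: z) simp
    ultimately show ?thesis by simp
  qed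
  have "I0 = (\<integral>\<^sup>+x. \<integral>\<^sup>+y. (SUP k. g k x y) \<partial>lborel \<partial>lborel)"
    unfolding I0_def
  proof (rule nn_integral_cong)
    fix x
    show "(\<integral>\<^sup>+y. ennreal (ph x * ph y * (ff x * ff y * - ln \<bar>x - y\<bar>)) \<partial>lborel) = (\<integral>\<^sup>+y. (SUP k. g k x y) \<partial>lborel)"
      by (rule nn_integral_cong_AE) (use AE_lborel_singleton[of x] ptw in \<open>auto elim!: eventually_mono\<close>)
  qed
  also have "\<dots> = (\<integral>\<^sup>+x. (SUP k. \<integral>\<^sup>+y. g k x y \<partial>lborel) \<partial>lborel)"
  proof (rule nn_integral_cong)
    fix x
    show "(\<integral>\<^sup>+y. (SUP k. g k x y) \<partial>lborel) = (SUP k. \<integral>\<^sup>+y. g k x y \<partial>lborel)"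
    proof (rule nn_integral_monotone_convergence_SUP)
      show "incseq (\<lambda>k y. g k x y)" using gmono by (auto simp: incseq_def le_fun_def)
      fix k show "(\<lambda>y. g k x y) \<in> borel_measurable lborel"
      proof -
        have "(\<lambda>y. GK k (x, y)) \<in> borel_measurable lborel"
          using GK_cont[of k] cont_sec1 by (simp add: borel_measurable_continuous_onI)
        then show ?thesis unfolding g_def by measurable
      qed
    qed
  qed
  also have "\<dots> = (SUP k. \<integral>\<^sup>+x. \<integral>\<^sup>+y. g k x y \<partial>lborel \<partial>lborel)"
  proof (rule nn_integral_monotone_convergence_SUP)
    show "incseq (\<lambda>k x. \<integral>\<^sup>+y. g k x y \<partial>lborel)"
      using gmono by (auto simp: incseq_def le_fun_def intro!: nn_integral_mono)
    fix k show "(\<lambda>x. \<integral>\<^sup>+y. g k x y \<partial>lborel) \<in> borel_measurable lborel"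
    proof -
      have "(\<lambda>p. ennreal (ph (fst p) * ph (snd p) * GK k p)) \<in> borel_measurable (lborel \<Otimes>\<^sub>M lborel)"
        by measurable
      then have "case_prod (g k) \<in> borel_measurable (lborel \<Otimes>\<^sub>M lborel)"
        unfolding g_def by (simp add: case_prod_beta')
      then show ?thesis by (rule lborel.borel_measurable_nn_integral)
    qed
  qed
  also have "\<dots> = (SUP k. ennreal (J (GK k)))"
    unfolding g_def using conv[OF GK_cont GK_nonneg] by simp
  finally show ?thesis .
qed

end



context Lset begin

definition A2S :: "nat \<Rightarrow> nat \<Rightarrow> real \<Rightarrow> real" where
  "A2S n1 n2 \<delta> = (1 / real (card (blockA n1 \<times> blockA n2))) *
        (\<Sum>i\<in>blockA n1. \<Sum>j\<in>{j\<in>blockA n2. i \<noteq> j \<and> \<bar>c i - c j\<bar> < \<delta>}. - ln \<bar>c i - c j\<bar>)"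

lemma c01: "k \<in> blockA n \<Longrightarrow> 1 \<le> n \<Longrightarrow> c k \<in> {0<..<1}"
proof -
  assume "k \<in> blockA n" "1 \<le> n"
  then have "k \<ge> 1" by (auto simp: blockA_def)
  then show ?thesis using c_in by auto
qed

lemma cdist1: "i \<in> blockA n1 \<Longrightarrow> j \<in> blockA n2 \<Longrightarrow> 1 \<le> n1 \<Longrightarrow> 1 \<le> n2 \<Longrightarrow> \<bar>c i - c j\<bar> \<le> 1"
  using c01[of i n1] c01[of j n2] by auto

lemma A2S_mono:
  assumes "1 \<le> n1" "1 \<le> n2" "\<delta>' \<le> \<delta>"
  shows "A2S n1 n2 \<delta>' \<le> A2S n1 n2 \<delta>"
  unfolding A2S_def
proof (rule mult_left_mono)
  show "(\<Sum>i\<in>blockA n1. \<Sum>j\<in>{j\<in>blockA n2. i \<noteq> j \<and> \<bar>c i - c j\<bar> < \<delta>'}. - ln \<bar>c i - c j\<bar>)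
     \<le> (\<Sum>i\<in>blockA n1. \<Sum>j\<in>{j\<in>blockA n2. i \<noteq> j \<and> \<bar>c i - c j\<bar> < \<delta>}. - ln \<bar>c i - c j\<bar>)"
  proof (rule sum_mono, rule sum_mono2)
    fix i assume i: "i \<in> blockA n1"
    show "finite {j\<in>blockA n2. i \<noteq> j \<and> \<bar>c i - c j\<bar> < \<delta>}" by (simp add: blockA_def)
    show "{j\<in>blockA n2. i \<noteq> j \<and> \<bar>c i - c j\<bar> < \<delta>'} \<subseteq> {j\<in>blockA n2. i \<noteq> j \<and> \<bar>c i - c j\<bar> < \<delta>}"
      using assms(3) by auto
    fix j assume "j \<in> {j\<in>blockA n2. i \<noteq> j \<and> \<bar>c i - c j\<bar> < \<delta>} - {j\<in>blockA n2. i \<noteq> j \<and> \<bar>c i - c j\<bar> < \<delta>'}"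
    then have "j \<in> blockA n2" by auto
    then show "0 \<le> - ln \<bar>c i - c j\<bar>" using cdist1[OF i _ assms(1,2)] by (intro neg_ln_nonneg) auto
  qed
qed simp

definition A2P :: "nat \<Rightarrow> real \<Rightarrow> bool" where
  "A2P k \<epsilon> \<longleftrightarrow> (\<forall>\<^sub>F n in sequentially. \<forall>a\<le>q n. \<forall>b\<le>q n. A2S (2^a*n) (2^b*n) (eta k) < \<epsilon>)"

lemma A2_eta: "\<epsilon> > 0 \<Longrightarrow> \<exists>K. \<forall>k\<ge>K. A2P k \<epsilon>"
proof -
  assume e: "\<epsilon> > 0"
  obtain \<delta> where d: "\<delta> > 0" "\<forall>\<^sub>F n in sequentially. \<forall>a\<le>q n. \<forall>b\<le>q n. A2S (2^a*n) (2^b*n) \<delta> < \<epsilon>"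
    using A2 e unfolding A2S_def by blast
  obtain K where K: "\<forall>k\<ge>K. eta k \<le> \<delta>" using eta_small[OF d(1)] by blast
  have "A2P k \<epsilon>" if "k \<ge> K" for k
    unfolding A2P_def
    using d(2) eventually_ge_at_top[of 1]
  proof eventually_elim
    case (elim n)
    show ?case
    proof (intro allI impI)
      fix a b assume "a \<le> q n" "b \<le> q n"
      then have "A2S (2^a*n) (2^b*n) \<delta> < \<epsilon>" using elim by blast
      moreover have "A2S (2^a*n) (2^b*n) (eta k) \<le> A2S (2^a*n) (2^b*n) \<delta>"
        by (rule A2S_mono) (use elim K that in auto)
      ultimately show "A2S (2^a*n) (2^b*n) (eta k) < \<epsilon>" by linarith
    qed
  qed
  then show ?thesis by blast
qed

lemma A3_distinct: "\<forall>\<^sub>F n in sequentially. \<forall>i\<in>blockAq n (q n). \<forall>j\<in>blockAq n (q n). i \<noteq> j \<longrightarrow> c i \<noteq> c j"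
  using A3[rule_format, OF zero_less_one]
proof eventually_elim
  case (elim n)
  show ?case
  proof (intro ballI impI)
    fix i j assume ij: "i \<in> blockAq n (q n)" "j \<in> blockAq n (q n)" "i \<noteq> j"
    then have "l i + l j < 2 * \<bar>c i - c j\<bar>" using elim by auto
    moreover have "i \<ge> 1" "j \<ge> 1" using ij by (auto simp: blockAq_def blockA_def)
    then have "l i > 0" "l j > 0" using l_pos by auto
    ultimately show "c i \<noteq> c j" by auto
  qed
qed

lemma blockA_in_q:
  assumes "a \<le> q n" shows "blockA (2^a*n) \<subseteq> blockAq n (q n)"
  using assms unfolding blockAq_def by auto

lemma D_tail:
  assumes "k0 \<le> k" "1 \<le> n" "1 \<le> q n"
    and dist: "\<forall>i\<in>blockAq n (q n). \<forall>j\<in>blockAq n (q n). i \<noteq> j \<longrightarrow> c i \<noteq> c j"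
  shows "D n (2*n) (\<lambda>p. GK k p - GK k0 p) \<le> FB * FB * A2S n (2*n) (eta k0)"
proof -
  have bn: "blockA n \<subseteq> blockAq n (q n)" using blockA_in_q[of 0 n] by simp
  have b2n: "blockA (2*n) \<subseteq> blockAq n (q n)" using blockA_in_q[of 1 n] assms(3) by simp
  have tm: "GK k (c i, c j) - GK k0 (c i, c j) \<le> FB * FB * (if i \<noteq> j \<and> \<bar>c i - c j\<bar> < eta k0 then - ln \<bar>c i - c j\<bar> else 0)"
    if i: "i \<in> blockA n" and j: "j \<in> blockA (2*n)" for i j
  proof -
    have ij: "i \<noteq> j" using i j by (auto simp: blockA_def)
    have cij: "c i \<noteq> c j" using dist bn b2n i j ij by blast
    have d1: "\<bar>c i - c j\<bar> \<le> 1" using cdist1[OF i j] assms(2) by simp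
    define R where "R = (if \<bar>c i - c j\<bar> < eta k0 then - ln \<bar>c i - c j\<bar> else 0)"
    have R0: "0 \<le> R" unfolding R_def using d1 neg_ln_nonneg[of "\<bar>c i - c j\<bar>"] by auto
    have "GK k (c i, c j) - GK k0 (c i, c j) = ff (c i) * ff (c j) * (LK k (c i, c j) - LK k0 (c i, c j))"
      unfolding GK_def by (simp add: algebra_simps)
    also have "\<dots> \<le> ff (c i) * ff (c j) * R"
      unfolding R_def using LK_diff[OF cij d1 assms(1)] ff_pos[of "c i"] ff_pos[of "c j"]
      by (intro mult_left_mono) auto
    also have "\<dots> \<le> FB * FB * R"
      using R0 FB_Fm(2)[of "c i"] FB_Fm(2)[of "c j"] ff_pos[of "c i"] ff_pos[of "c j"]
      by (intro mult_right_mono mult_mono) auto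
    finally show ?thesis unfolding R_def using ij by simp
  qed
  have "(\<Sum>i\<in>blockA n. \<Sum>j\<in>blockA (2*n). GK k (c i, c j) - GK k0 (c i, c j)) \<le>
        (\<Sum>i\<in>blockA n. \<Sum>j\<in>blockA (2*n). FB * FB * (if i \<noteq> j \<and> \<bar>c i - c j\<bar> < eta k0 then - ln \<bar>c i - c j\<bar> else 0))"
    by (intro sum_mono tm)
  also have "\<dots> = FB * FB * (\<Sum>i\<in>blockA n. \<Sum>j\<in>blockA (2*n). (if i \<noteq> j \<and> \<bar>c i - c j\<bar> < eta k0 then - ln \<bar>c i - c j\<bar> else 0))"
    by (simp only: sum_distrib_left)
  also have "\<dots> = FB * FB * (\<Sum>i\<in>blockA n. \<Sum>j\<in>{j\<in>blockA (2*n). i \<noteq> j \<and> \<bar>c i - c j\<bar> < eta k0}. - ln \<bar>c i - c j\<bar>)"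
  proof -
    have fin: "finite (blockA (2*n))" by (simp add: blockA_def)
    show ?thesis by (simp only: sum.inter_filter[OF fin])
  qed
  finally have s: "(\<Sum>i\<in>blockA n. \<Sum>j\<in>blockA (2*n). GK k (c i, c j) - GK k0 (c i, c j)) \<le>
      FB * FB * (\<Sum>i\<in>blockA n. \<Sum>j\<in>{j\<in>blockA (2*n). i \<noteq> j \<and> \<bar>c i - c j\<bar> < eta k0}. - ln \<bar>c i - c j\<bar>)" .
  show ?thesis
    unfolding D_def A2S_def card_cartesian_product
    using mult_left_mono[OF s, of "1 / (real (card (blockA n)) * real (card (blockA (2 * n))))"]
    by (simp add: mult_ac)
qed

lemma J_tail:
  assumes "A2P k0 \<epsilon>" "k0 \<le> k"
  shows "J (GK k) - J (GK k0) \<le> FB * FB * \<epsilon>"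
proof -
  have Gc: "continuous_on UNIV (\<lambda>p. GK k p - GK k0 p)" using GK_cont[of k] GK_cont[of k0] by (intro continuous_intros)
  have "J (\<lambda>p. GK k p - GK k0 p) \<le> FB * FB * \<epsilon> + e" if e: "e > 0" for e
  proof -
    obtain N where N: "\<forall>n1\<ge>N. \<forall>n2\<ge>N. \<bar>D n1 n2 (\<lambda>p. GK k p - GK k0 p) - J (\<lambda>p. GK k p - GK k0 p)\<bar> < e"
      using Q_cont_ev[OF Gc e] by blast
    have ev: "\<forall>\<^sub>F n in sequentially. (\<forall>a\<le>q n. \<forall>b\<le>q n. A2S (2^a*n) (2^b*n) (eta k0) < \<epsilon>) \<and>
         (\<forall>i\<in>blockAq n (q n). \<forall>j\<in>blockAq n (q n). i \<noteq> j \<longrightarrow> c i \<noteq> c j) \<and> 1 \<le> q n \<and> N \<le> n \<and> 1 \<le> n"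
    proof (intro eventually_conj)
      show "\<forall>\<^sub>F n in sequentially. \<forall>a\<le>q n. \<forall>b\<le>q n. A2S (2^a*n) (2^b*n) (eta k0) < \<epsilon>"
        using assms(1) unfolding A2P_def .
      show "\<forall>\<^sub>F n in sequentially. \<forall>i\<in>blockAq n (q n). \<forall>j\<in>blockAq n (q n). i \<noteq> j \<longrightarrow> c i \<noteq> c j"
        by (rule A3_distinct)
      show "\<forall>\<^sub>F n in sequentially. 1 \<le> q n"
        using q_lim unfolding filterlim_at_top by blast
      show "\<forall>\<^sub>F n in sequentially. N \<le> n" by (rule eventually_ge_at_top)
      show "\<forall>\<^sub>F n in sequentially. 1 \<le> n" by (rule eventually_ge_at_top)
    qed
    then obtain M where M: "\<forall>n\<ge>M. (\<forall>a\<le>q n. \<forall>b\<le>q n. A2S (2^a*n) (2^b*n) (eta k0) < \<epsilon>) \<and>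
         (\<forall>i\<in>blockAq n (q n). \<forall>j\<in>blockAq n (q n). i \<noteq> j \<longrightarrow> c i \<noteq> c j) \<and> 1 \<le> q n \<and> N \<le> n \<and> 1 \<le> n"
      unfolding eventually_sequentially by blast
    define n where "n = M"
    have n: "\<forall>a\<le>q n. \<forall>b\<le>q n. A2S (2^a*n) (2^b*n) (eta k0) < \<epsilon>"
      "\<forall>i\<in>blockAq n (q n). \<forall>j\<in>blockAq n (q n). i \<noteq> j \<longrightarrow> c i \<noteq> c j" "1 \<le> q n" "N \<le> n" "1 \<le> n"
      using M unfolding n_def by auto
    have a2: "A2S n (2*n) (eta k0) < \<epsilon>" using n(1)[rule_format, of 0 1] n(3) by simp
    have "D n (2*n) (\<lambda>p. GK k p - GK k0 p) \<le> FB * FB * A2S n (2*n) (eta k0)"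
      by (rule D_tail) (use assms(2) n in auto)
    also have "\<dots> \<le> FB * FB * \<epsilon>" using a2 FB_pos by (intro mult_left_mono) auto
    finally have "D n (2*n) (\<lambda>p. GK k p - GK k0 p) \<le> FB * FB * \<epsilon>" .
    moreover have "\<bar>D n (2*n) (\<lambda>p. GK k p - GK k0 p) - J (\<lambda>p. GK k p - GK k0 p)\<bar> < e"
      using N n(4) by auto
    ultimately show ?thesis by linarith
  qed
  then have "J (\<lambda>p. GK k p - GK k0 p) \<le> FB * FB * \<epsilon>" by (rule field_le_epsilon)
  then show ?thesis using J_diff[OF GK_cont GK_cont, of k k0] by simp
qed

lemma I0_approx:
  "\<exists>I0r\<ge>0. I0 = ennreal I0r \<and> (\<forall>k. J (GK k) \<le> I0r) \<and>
     (\<forall>\<epsilon>>0. \<exists>K. \<forall>k\<ge>K. A2P k \<epsilon> \<and> I0r \<le> J (GK k) + FB * FB * \<epsilon>)"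
proof -
  have bound: "I0 \<le> ennreal (J (GK k0) + FB * FB * \<epsilon>)" if "A2P k0 \<epsilon>" "\<epsilon> > 0" for k0 \<epsilon>
    unfolding I0_SUP
  proof (rule SUP_least)
    fix k
    have "J (GK k) \<le> J (GK k0) + FB * FB * \<epsilon>"
    proof (cases "k0 \<le> k")
      case True then show ?thesis using J_tail[OF that(1) True] by linarith
    next
      case False
      then have "J (GK k) \<le> J (GK k0)" by (intro J_GK_mono) auto
      moreover have "0 \<le> FB * FB * \<epsilon>" using FB_pos that(2) by simp
      ultimately show ?thesis by linarith
    qed
    then show "ennreal (J (GK k)) \<le> ennreal (J (GK k0) + FB * FB * \<epsilon>)" by (rule ennreal_leI)
  qed
  obtain K1 where K1: "\<forall>k\<ge>K1. A2P k 1" using A2_eta[of 1] by auto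
  have fin: "I0 < \<infinity>" using bound[of K1 1] K1 by (simp add: le_less_trans)
  define I0r where "I0r = enn2real I0"
  have eq: "I0 = ennreal I0r" unfolding I0r_def using fin by simp
  have nn: "0 \<le> I0r" unfolding I0r_def by simp
  have lower: "J (GK k) \<le> I0r" for k
  proof -
    have "ennreal (J (GK k)) \<le> I0" unfolding I0_SUP by (rule SUP_upper) simp
    then show ?thesis using eq nn by (simp add: ennreal_le_iff)
  qed
  have upper: "\<exists>K. \<forall>k\<ge>K. A2P k \<epsilon> \<and> I0r \<le> J (GK k) + FB * FB * \<epsilon>" if e: "\<epsilon> > 0" for \<epsilon>
  proof -
    obtain K where K: "\<forall>k\<ge>K. A2P k \<epsilon>" using A2_eta[OF e] by blast
    have "I0r \<le> J (GK k) + FB * FB * \<epsilon>" if "k \<ge> K" for k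
    proof -
      have "ennreal I0r \<le> ennreal (J (GK k) + FB * FB * \<epsilon>)" using bound[of k \<epsilon>] K that e eq by simp
      moreover have "0 \<le> J (GK k) + FB * FB * \<epsilon>" using J_GK_nonneg[of k] FB_pos e by simp
      ultimately show ?thesis by (simp add: ennreal_le_iff)
    qed
    then show ?thesis using K by blast
  qed
  show ?thesis using eq nn lower upper by blast
qed

end



definition bnd :: "real \<Rightarrow> real \<Rightarrow> real" where
  "bnd \<eta> x = min 1 (max 0 (2 - x / \<eta>)) + min 1 (max 0 (2 - (1 - x) / \<eta>))"

lemma bnd_cont: "0 < \<eta> \<Longrightarrow> continuous_on S (bnd \<eta>)"
  unfolding bnd_def by (intro continuous_intros) auto

lemma bnd_nonneg: "0 \<le> bnd \<eta> x" and bnd_le2: "bnd \<eta> x \<le> 2"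
  unfolding bnd_def by auto

lemma bnd_one:
  assumes "0 < \<eta>" "x < \<eta> \<or> 1 - \<eta> < x"
  shows "1 \<le> bnd \<eta> x"
proof -
  consider "x < \<eta>" | "1 - \<eta> < x" using assms(2) by blast
  then show ?thesis
  proof cases
    case 1
    then have "x / \<eta> < 1" using assms(1) by (simp add: divide_less_eq)
    then have "min 1 (max 0 (2 - x / \<eta>)) = 1" by simp
    then show ?thesis unfolding bnd_def by simp
  next
    case 2
    then have "(1 - x) / \<eta> < 1" using assms(1) by (simp add: divide_less_eq)
    then have "min 1 (max 0 (2 - (1 - x) / \<eta>)) = 1" by simp
    then show ?thesis unfolding bnd_def by simp
  qed
qed

lemma bnd_zero:
  assumes "0 < \<eta>" "2 * \<eta> \<le> x" "2 * \<eta> \<le> 1 - x"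
  shows "bnd \<eta> x = 0"
proof -
  have "2 \<le> x / \<eta>" using assms by (simp add: le_divide_eq)
  moreover have "2 \<le> (1 - x) / \<eta>" using assms by (simp add: le_divide_eq)
  ultimately show ?thesis unfolding bnd_def by simp
qed

context Lset begin

lemma l_anti: "1 \<le> n \<Longrightarrow> n \<le> i \<Longrightarrow> l i \<le> l n"
proof -
  assume n: "1 \<le> n" and ni: "n \<le> i"
  show ?thesis using ni
  proof (induction i rule: dec_induct)
    case (step m)
    then have "l (Suc m) \<le> l m" using l_decr n by auto
    then show ?case using step by linarith
  qed simp
qed

lemma bnd_int_small: "\<epsilon> > 0 \<Longrightarrow> \<exists>\<eta>>0. (\<integral>x. bnd \<eta> x * ph x \<partial>lborel) < \<epsilon>"
proof -
  assume e: "\<epsilon> > 0"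
  have "(\<lambda>k. \<integral>x. bnd (eta k) x * ph x \<partial>lborel) \<longlonglongrightarrow> (\<integral>x. (0::real) \<partial>(lborel::real measure))"
  proof (rule integral_dominated_convergence[where w="\<lambda>x. 2 * ph x" and f="\<lambda>x. 0" and s="\<lambda>k x. bnd (eta k) x * ph x"])
    show "(\<lambda>x. 0::real) \<in> borel_measurable lborel" by simp
    fix k
    show "(\<lambda>x. bnd (eta k) x * ph x) \<in> borel_measurable lborel"
      by (rule cont_ind_meas[OF bnd_cont[OF eta_pos]])
    show "integrable lborel (\<lambda>x. 2 * ph x)" using ph_int by simp
    show "AE x in lborel. norm (bnd (eta k) x * ph x) \<le> 2 * ph x"
      using bnd_nonneg bnd_le2 ph_nonneg by (intro AE_I2) (simp add: abs_mult mult_right_mono)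
  next
    show "AE x in lborel. (\<lambda>k. bnd (eta k) x * ph x) \<longlonglongrightarrow> 0"
      using AE_lborel_singleton[of 0] AE_lborel_singleton[of 1]
    proof eventually_elim
      case (elim x)
      show ?case
      proof (cases "x \<in> {0..1}")
        case True
        then have x: "0 < x" "x < 1" using elim by auto
        have p: "0 < min x (1 - x) / 2" using x by simp
        obtain K where K: "\<forall>k\<ge>K. eta k \<le> min x (1 - x) / 2" using eta_small[OF p] by blast
        have "\<forall>k\<ge>K. bnd (eta k) x * ph x = 0"
        proof (intro allI impI)
          fix k assume "K \<le> k"
          then have "eta k \<le> min x (1 - x) / 2" using K by auto
          then have "bnd (eta k) x = 0" by (intro bnd_zero eta_pos) auto
          then show "bnd (eta k) x * ph x = 0" by simp
        qed
        then show ?thesis by (intro tendsto_eventually) (auto simp: eventually_sequentially)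
      next
        case False
        then show ?thesis by (simp add: ph_out)
      qed
    qed
  qed
  then have "(\<lambda>k. \<integral>x. bnd (eta k) x * ph x \<partial>lborel) \<longlonglongrightarrow> 0" by simp
  then have "\<forall>\<^sub>F k in sequentially. (\<integral>x. bnd (eta k) x * ph x \<partial>lborel) < \<epsilon>"
    using e by (rule order_tendstoD(2))
  then obtain k where "(\<integral>x. bnd (eta k) x * ph x \<partial>lborel) < \<epsilon>"
    unfolding eventually_sequentially by blast
  then show ?thesis using eta_pos[of k] by blast
qed

definition aa :: "nat \<Rightarrow> real \<Rightarrow> real" where
  "aa i x = f x / l i * indicator (interv c l i \<inter> {0..1}) x"

definition w :: "nat \<Rightarrow> real" where
  "w i = (\<integral>x. aa i x \<partial>lborel)"

lemma interv_sets[measurable]: "interv c l i \<in> sets borel"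
  unfolding interv_def by simp

lemma aa_meas[measurable]: "aa i \<in> borel_measurable borel"
proof -
  have sub: "interv c l i \<inter> {0..1} \<subseteq> {0..1}" by auto
  have "continuous_on (interv c l i \<inter> {0..1}) (\<lambda>x. f x * (1 / l i))"
    by (rule continuous_on_mult_right) (rule continuous_on_subset[OF f_cont sub])
  then have "(\<lambda>x. indicator (interv c l i \<inter> {0..1}) x *\<^sub>R (f x * (1 / l i))) \<in> borel_measurable borel"
    by (intro borel_measurable_continuous_on_indicator) auto
  then show ?thesis unfolding aa_def by (simp add: mult.commute)
qed

lemma aa_nonneg: "1 \<le> i \<Longrightarrow> 0 \<le> aa i x"
  using f_pos l_pos unfolding aa_def by (auto simp: indicator_def intro!: divide_nonneg_pos less_imp_le)

lemma aa_le: "1 \<le> i \<Longrightarrow> aa i x \<le> FB / l i * indicator (interv c l i) x"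
proof -
  assume i: "1 \<le> i"
  then have li: "0 < l i" using l_pos by auto
  show ?thesis
  proof (cases "x \<in> interv c l i \<inter> {0..1}")
    case True
    then have "f x \<le> FB" using FB_Fm(2)[of x] ff_eq[of x] by auto
    then show ?thesis using True li unfolding aa_def by (simp add: divide_right_mono)
  next
    case False
    then have "aa i x = 0" unfolding aa_def by simp
    moreover have "0 \<le> FB / l i * indicator (interv c l i) x" using FB_pos li by simp
    ultimately show ?thesis by simp
  qed
qed

lemma interv_measure: "1 \<le> i \<Longrightarrow> measure lborel (interv c l i) = l i"
  using l_pos unfolding interv_def by auto

lemma interv_emeasure: "1 \<le> i \<Longrightarrow> emeasure lborel (interv c l i) < \<infinity>"
  using l_pos unfolding interv_def by auto

lemma aa_int: "1 \<le> i \<Longrightarrow> integrable lborel (aa i)"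
proof -
  assume i: "1 \<le> i"
  show ?thesis
  proof (rule Bochner_Integration.integrable_bound[where f="\<lambda>x. FB / l i * indicator (interv c l i) x"])
    show "integrable lborel (\<lambda>x. FB / l i * indicator (interv c l i) x)"
      using interv_emeasure[OF i] by (intro integrable_mult_right integrable_real_indicator) auto
    show "aa i \<in> borel_measurable lborel" by simp
    show "AE x in lborel. norm (aa i x) \<le> norm (FB / l i * indicator (interv c l i) x)"
    proof (intro AE_I2)
      fix x
      have "norm (aa i x) = aa i x" using aa_nonneg[OF i, of x] by simp
      also have "\<dots> \<le> FB / l i * indicator (interv c l i) x" by (rule aa_le[OF i])
      also have "\<dots> \<le> norm (FB / l i * indicator (interv c l i) x)" unfolding real_norm_def by (rule abs_ge_self)
      finally show "norm (aa i x) \<le> norm (FB / l i * indicator (interv c l i) x)" .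
    qed
  qed
qed

lemma w_nonneg: "1 \<le> i \<Longrightarrow> 0 \<le> w i"
  unfolding w_def using aa_nonneg by (auto intro: integral_nonneg_AE)

lemma w_le: "1 \<le> i \<Longrightarrow> w i \<le> FB"
proof -
  assume i: "1 \<le> i"
  then have li: "0 < l i" using l_pos by auto
  have "w i \<le> (\<integral>x. FB / l i * indicator (interv c l i) x \<partial>lborel)"
    unfolding w_def
  proof (rule Bochner_Integration.integral_mono[OF aa_int[OF i]])
    have "integrable lborel (indicator (interv c l i) :: real \<Rightarrow> real)"
      using interv_emeasure[OF i] by (intro integrable_real_indicator) auto
    then show "integrable lborel (\<lambda>x. FB / l i * indicator (interv c l i) x)" by simp
    fix x show "aa i x \<le> FB / l i * indicator (interv c l i) x" by (rule aa_le[OF i])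
  qed
  also have "\<dots> = FB / l i * l i" using interv_measure[OF i] by simp
  also have "\<dots> = FB" using li by simp
  finally show ?thesis .
qed

lemma w_close:
  assumes i: "1 \<le> i" and sub: "interv c l i \<subseteq> {0..1}" and ci: "c i \<in> {0..1}"
    and cl: "\<forall>x\<in>interv c l i. \<bar>f x - f (c i)\<bar> \<le> e"
  shows "\<bar>w i - f (c i)\<bar> \<le> e"
proof -
  have li: "0 < l i" using l_pos i by auto
  have ii: "integrable lborel (indicator (interv c l i) :: real \<Rightarrow> real)"
    using interv_emeasure[OF i] by (intro integrable_real_indicator) auto
  have fc: "f (c i) = (\<integral>x. f (c i) / l i * indicator (interv c l i) x \<partial>lborel)"
    using interv_measure[OF i] li by simp
  have "w i - f (c i) = (\<integral>x. aa i x \<partial>lborel) - (\<integral>x. f (c i) / l i * indicator (interv c l i) x \<partial>lborel)"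
    unfolding w_def using fc by linarith
  also have "\<dots> = (\<integral>x. aa i x - f (c i) / l i * indicator (interv c l i) x \<partial>lborel)"
    by (rule Bochner_Integration.integral_diff[symmetric]) (use aa_int[OF i] ii in auto)
  also have "\<dots> = (\<integral>x. (f x - f (c i)) / l i * indicator (interv c l i) x \<partial>lborel)"
  proof (rule Bochner_Integration.integral_cong[OF refl])
    fix x
    have "interv c l i \<inter> {0..1} = interv c l i" using sub by auto
    then show "aa i x - f (c i) / l i * indicator (interv c l i) x = (f x - f (c i)) / l i * indicator (interv c l i) x"
      unfolding aa_def by (simp add: diff_divide_distrib left_diff_distrib)
  qed
  finally have eq: "w i - f (c i) = (\<integral>x. (f x - f (c i)) / l i * indicator (interv c l i) x \<partial>lborel)" .
  have "norm (\<integral>x. (f x - f (c i)) / l i * indicator (interv c l i) x \<partial>lborel) \<le> (\<integral>x. e / l i * indicator (interv c l i) x \<partial>lborel)"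
  proof (rule Bochner_Integration.integral_norm_bound_integral)
    have "integrable lborel (\<lambda>x. aa i x - f (c i) / l i * indicator (interv c l i) x)"
      using aa_int[OF i] ii by auto
    moreover have "(\<lambda>x. aa i x - f (c i) / l i * indicator (interv c l i) x) = (\<lambda>x. (f x - f (c i)) / l i * indicator (interv c l i) x)"
    proof
      fix x
      have "interv c l i \<inter> {0..1} = interv c l i" using sub by auto
      then show "aa i x - f (c i) / l i * indicator (interv c l i) x = (f x - f (c i)) / l i * indicator (interv c l i) x"
        unfolding aa_def by (simp add: diff_divide_distrib left_diff_distrib)
    qed
    ultimately show "integrable lborel (\<lambda>x. (f x - f (c i)) / l i * indicator (interv c l i) x)" by simp
    show "integrable lborel (\<lambda>x. e / l i * indicator (interv c l i) x)" using ii by simp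
    fix x
    show "norm ((f x - f (c i)) / l i * indicator (interv c l i) x) \<le> e / l i * indicator (interv c l i) x"
    proof (cases "x \<in> interv c l i")
      case True
      then show ?thesis using cl li by (simp add: abs_mult divide_right_mono)
    qed simp
  qed
  also have "\<dots> = e" using interv_measure[OF i] li by simp
  finally show ?thesis using eq by simp
qed

definition dev :: "nat \<Rightarrow> real" where
  "dev n = (1 / real (card (blockA n))) * (\<Sum>i\<in>blockA n. \<bar>w i - ff (c i)\<bar>)"

lemma dev_lim: "dev \<longlonglongrightarrow> 0"
proof (rule LIMSEQ_I)
  fix \<epsilon> :: real assume e: "\<epsilon> > 0"
  define e' where "e' = \<epsilon> / (2 + 4 * FB)"
  have e': "0 < e'" unfolding e'_def using e FB_pos by simp
  obtain \<eta> where eta: "\<eta> > 0" "(\<integral>x. bnd \<eta> x * ph x \<partial>lborel) < e'" using bnd_int_small[OF e'] by blast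
  have uc: "uniformly_continuous_on {0..1} f" using f_cont by (intro compact_uniformly_continuous) auto
  obtain d where d: "d > 0" "\<forall>x\<in>{0..1}. \<forall>y\<in>{0..1}. dist y x < d \<longrightarrow> dist (f y) (f x) < e'"
    using uc e' unfolding uniformly_continuous_on_def by metis
  have ev1: "\<forall>\<^sub>F n in sequentially. avg n (bnd \<eta>) < (\<integral>x. bnd \<eta> x * ph x \<partial>lborel) + e'"
    using A1'[OF bnd_cont[OF eta(1)]] e' unfolding tendsto_iff dist_real_def
    by (auto elim!: allE[of _ e'] eventually_mono)
  have ev2: "\<forall>\<^sub>F n in sequentially. \<bar>l n\<bar> < min \<eta> d"
  proof -
    have md: "0 < min \<eta> d" using eta d by simp
    show ?thesis using l_lim[unfolded tendsto_iff dist_real_def, rule_format, OF md] by simp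
  qed
  obtain N where N: "\<forall>n\<ge>N. avg n (bnd \<eta>) < (\<integral>x. bnd \<eta> x * ph x \<partial>lborel) + e' \<and> \<bar>l n\<bar> < min \<eta> d"
    using eventually_conj[OF ev1 ev2] unfolding eventually_sequentially by blast
  show "\<exists>N. \<forall>n\<ge>N. norm (dev n - 0) < \<epsilon>"
  proof (intro exI[of _ "max N 1"] allI impI)
    fix n assume nN: "max N 1 \<le> n"
    then have n1: "1 \<le> n" and nN': "N \<le> n" by auto
    have avgb: "avg n (bnd \<eta>) < e' + e'" using N nN' eta by fastforce
    have ln: "l n < min \<eta> d" using N nN' by fastforce
    have bound: "\<bar>w i - ff (c i)\<bar> \<le> e' + 2 * FB * bnd \<eta> (c i)" if i: "i \<in> blockA n" for i
    proof -
      have i1: "1 \<le> i" and ni: "n \<le> i" using i n1 by (auto simp: blockA_def)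
      have li: "0 < l i" "l i \<le> l n" using l_pos i1 l_anti[OF n1 ni] by auto
      have ci: "c i \<in> {0<..<1}" using c01[OF i n1] .
      have ffc: "ff (c i) = f (c i)" using ci by (intro ff_eq) auto
      show ?thesis
      proof (cases "c i < \<eta> \<or> 1 - \<eta> < c i")
        case True
        then have b1: "1 \<le> bnd \<eta> (c i)" by (intro bnd_one eta)
        have "\<bar>w i - ff (c i)\<bar> \<le> FB + FB"
          using w_nonneg[OF i1] w_le[OF i1] FB_Fm(2)[of "c i"] ff_pos[of "c i"] by (simp add: abs_le_iff)
        also have "\<dots> \<le> 2 * FB * bnd \<eta> (c i)" using b1 FB_pos by simp
        finally show ?thesis using e' by simp
      next
        case False
        have sub: "interv c l i \<subseteq> {0..1}"
          using False li ln unfolding interv_def by auto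
        have cl: "\<forall>x\<in>interv c l i. \<bar>f x - f (c i)\<bar> \<le> e'"
        proof
          fix x assume x: "x \<in> interv c l i"
          have "dist x (c i) < d" using x li ln unfolding interv_def dist_real_def by auto
          then have "dist (f x) (f (c i)) < e'" using d(2) sub x ci by auto
          then show "\<bar>f x - f (c i)\<bar> \<le> e'" by (simp add: dist_real_def)
        qed
        have "\<bar>w i - ff (c i)\<bar> \<le> e'" unfolding ffc by (rule w_close[OF i1 sub _ cl]) (use ci in auto)
        then show ?thesis using bnd_nonneg[of \<eta> "c i"] FB_pos by (simp add: add_increasing2)
      qed
    qed
    have cardpos: "0 < real (card (blockA n))" using n1 by (simp add: blockA_def)
    have "dev n \<le> (1 / real (card (blockA n))) * (\<Sum>i\<in>blockA n. e' + 2 * FB * bnd \<eta> (c i))"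
      unfolding dev_def using bound cardpos by (intro mult_left_mono sum_mono) auto
    also have "\<dots> = e' + 2 * FB * avg n (bnd \<eta>)"
      unfolding avg_def using cardpos by (simp add: sum.distrib sum_distrib_left[symmetric] field_simps)
    also have "\<dots> < e' + 2 * FB * (e' + e')" using avgb FB_pos by simp
    also have "\<dots> \<le> \<epsilon>"
    proof -
      have "e' + 2 * FB * (e' + e') = e' * (1 + 4 * FB)" by (simp add: algebra_simps)
      also have "\<dots> \<le> e' * (2 + 4 * FB)" using e' by simp
      also have "\<dots> = \<epsilon>" unfolding e'_def using FB_pos by simp
      finally show ?thesis .
    qed
    finally have "dev n < \<epsilon>" .
    moreover have "0 \<le> dev n" unfolding dev_def by (simp add: sum_nonneg)
    ultimately show "norm (dev n - 0) < \<epsilon>" by simp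
  qed
qed

definition Mw :: "nat \<Rightarrow> real" where
  "Mw n = (1 / real (card (blockA n))) * (\<Sum>i\<in>blockA n. w i)"

definition Phi :: real where "Phi = (\<integral>x. ff x * ph x \<partial>lborel)"

lemma avg_ff_lim: "(\<lambda>n. avg n ff) \<longlonglongrightarrow> Phi"
  unfolding Phi_def using ff_cont by (intro A1') (auto intro: continuous_on_subset)

lemma Phi_pos: "Phi \<ge> Fm"
proof (rule tendsto_lowerbound[OF avg_ff_lim])
  show "\<forall>\<^sub>F n in sequentially. Fm \<le> avg n ff"
    using eventually_ge_at_top[of 1]
  proof eventually_elim
    case (elim n)
    have cardpos: "0 < real (card (blockA n))" using elim by (simp add: blockA_def)
    have "(\<Sum>i\<in>blockA n. Fm) \<le> (\<Sum>i\<in>blockA n. ff (c i))" by (intro sum_mono) (simp add: FB_Fm)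
    then show ?case unfolding avg_def using cardpos by (simp add: field_simps)
  qed
qed simp

lemma Mw_avg: "\<bar>Mw n - avg n ff\<bar> \<le> dev n"
proof -
  have "Mw n - avg n ff = (1 / real (card (blockA n))) * (\<Sum>i\<in>blockA n. w i - ff (c i))"
    unfolding Mw_def avg_def by (simp add: sum_subtractf right_diff_distrib)
  also have "\<bar>\<dots>\<bar> = (1 / real (card (blockA n))) * \<bar>\<Sum>i\<in>blockA n. w i - ff (c i)\<bar>"
    by (simp add: abs_mult)
  also have "\<dots> \<le> dev n"
    unfolding dev_def by (intro mult_left_mono sum_abs) simp
  finally show ?thesis .
qed

lemma Mw_lim: "Mw \<longlonglongrightarrow> Phi"
proof -
  have "(\<lambda>n. Mw n - avg n ff) \<longlonglongrightarrow> 0"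
    by (rule Lim_null_comparison[OF _ dev_lim]) (use Mw_avg in auto)
  from tendsto_add[OF this avg_ff_lim] show ?thesis by simp
qed

end



lemma logbound:
  fixes x y ci cj li lj e :: real
  assumes x: "\<bar>x - ci\<bar> < li / 2" and y: "\<bar>y - cj\<bar> < lj / 2"
    and e: "0 < e" "e \<le> 1/2" and sep: "li + lj < e * (2 * \<bar>ci - cj\<bar>)"
  shows "- ln \<bar>ci - cj\<bar> - e \<le> - ln \<bar>x - y\<bar>" "- ln \<bar>x - y\<bar> \<le> - ln \<bar>ci - cj\<bar> + 2 * e"
proof -
  define d where "d = \<bar>ci - cj\<bar>"
  have li: "0 \<le> li" "0 \<le> lj" using x y abs_ge_zero[of "x - ci"] abs_ge_zero[of "y - cj"] by linarith+
  have dpos: "0 < d"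
  proof -
    have "0 < e * (2 * d)" using sep li unfolding d_def by linarith
    then show ?thesis using e by (simp add: zero_less_mult_iff)
  qed
  define p where "p = e * d"
  have pp: "li / 2 + lj / 2 < p" using sep unfolding d_def p_def by (simp add: field_simps)
  have m1: "d * (1 - e) = d - p" unfolding p_def by (simp add: algebra_simps)
  have m2: "d * (1 + e) = d + p" unfolding p_def by (simp add: algebra_simps)
  have t1: "d \<le> \<bar>x - y\<bar> + \<bar>x - ci\<bar> + \<bar>y - cj\<bar>" unfolding d_def by linarith
  have t2: "\<bar>x - y\<bar> \<le> d + \<bar>x - ci\<bar> + \<bar>y - cj\<bar>" unfolding d_def by linarith
  have lo: "d * (1 - e) < \<bar>x - y\<bar>" unfolding m1 using t1 x y pp by linarith
  have hi: "\<bar>x - y\<bar> < d * (1 + e)" unfolding m2 using t2 x y pp by linarith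
  have p1: "0 < d * (1 - e)" using dpos e by simp
  have p2: "0 < d * (1 + e)" using dpos e by simp
  have xy: "0 < \<bar>x - y\<bar>" using lo p1 by linarith
  have "ln \<bar>x - y\<bar> \<le> ln (d * (1 + e))" using hi xy p2 by simp
  also have "\<dots> = ln d + ln (1 + e)" using dpos e by (simp add: ln_mult)
  also have "\<dots> \<le> ln d + e" using ln_add_one_self_le_self[of e] e by simp
  finally show "- ln \<bar>ci - cj\<bar> - e \<le> - ln \<bar>x - y\<bar>" unfolding d_def by simp
  have "ln (d * (1 - e)) \<le> ln \<bar>x - y\<bar>" using lo xy p1 by simp
  moreover have "ln (d * (1 - e)) = ln d + ln (1 - e)" using dpos e by (simp add: ln_mult)
  moreover have "- e - 2 * e\<^sup>2 \<le> ln (1 - e)" using ln_one_minus_pos_lower_bound[of e] e by simp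
  moreover have "2 * e\<^sup>2 \<le> e" using e by (simp add: power2_eq_square mult_le_cancel_right1)
  ultimately show "- ln \<bar>x - y\<bar> \<le> - ln \<bar>ci - cj\<bar> + 2 * e" unfolding d_def by linarith
qed

context Lset begin

definition Wn :: "nat \<Rightarrow> real" where "Wn n = (\<Sum>i\<in>blockA n. w i)"

definition hn :: "nat \<Rightarrow> real \<Rightarrow> real" where "hn n x = (\<Sum>k\<in>blockA n. aa k x) / Wn n"

definition Ln :: "nat \<Rightarrow> nat \<Rightarrow> real" where "Ln i j = - ln \<bar>c i - c j\<bar>"

definition mainT :: "nat \<Rightarrow> nat \<Rightarrow> real" where
  "mainT n1 n2 = (\<Sum>i\<in>blockA n1. \<Sum>j\<in>blockA n2. w i * w j * Ln i j) / (Wn n1 * Wn n2)"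

lemma blockA_ge1: "i \<in> blockA n \<Longrightarrow> 1 \<le> n \<Longrightarrow> 1 \<le> i"
  by (auto simp: blockA_def)

lemma finite_blockA[simp]: "finite (blockA n)"
  by (simp add: blockA_def)

lemma card_blockA: "real (card (blockA n)) = real n"
  by (simp add: blockA_def)

lemma Mw_Wn: "Mw n = Wn n / real (card (blockA n))"
  unfolding Mw_def Wn_def by simp

lemma aa_nz: "aa i x \<noteq> 0 \<Longrightarrow> x \<in> interv c l i \<and> x \<in> {0..1}"
  unfolding aa_def by (auto simp: indicator_def split: if_splits)

lemma densA_eq: "densA c l f n x = (1 / real (card (blockA n))) * (\<Sum>k\<in>blockA n. aa k x)"
  unfolding densA_def aa_def by simp

lemma Vset_open: "open (Vset c l n)"
  unfolding Vset_def interv_def by (intro open_UN ballI open_greaterThanLessThan)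

lemma sum_aa_int:
  assumes "1 \<le> n" shows "integrable lborel (\<lambda>x. \<Sum>k\<in>blockA n. aa k x * \<kappa> k)"
proof (rule Bochner_Integration.integrable_sum)
  fix k assume "k \<in> blockA n"
  with assms have "integrable lborel (aa k)" using aa_int blockA_ge1 by blast
  then show "integrable lborel (\<lambda>x. aa k x * \<kappa> k)" by simp
qed

lemma nn_sum_aa:
  assumes n: "1 \<le> n" and kp: "\<And>k. k \<in> blockA n \<Longrightarrow> 0 \<le> \<kappa> k"
  shows "(\<integral>\<^sup>+x. ennreal (\<Sum>k\<in>blockA n. aa k x * \<kappa> k) \<partial>lborel) = ennreal (\<Sum>k\<in>blockA n. w k * \<kappa> k)"
proof -
  have "(\<integral>\<^sup>+x. ennreal (\<Sum>k\<in>blockA n. aa k x * \<kappa> k) \<partial>lborel) = ennreal (\<integral>x. (\<Sum>k\<in>blockA n. aa k x * \<kappa> k) \<partial>lborel)"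
  proof (rule nn_integral_eq_integral[OF sum_aa_int[OF n]])
    show "AE x in lborel. 0 \<le> (\<Sum>k\<in>blockA n. aa k x * \<kappa> k)"
      using aa_nonneg kp blockA_ge1[OF _ n] by (intro AE_I2 sum_nonneg mult_nonneg_nonneg) auto
  qed
  also have "(\<integral>x. (\<Sum>k\<in>blockA n. aa k x * \<kappa> k) \<partial>lborel) = (\<Sum>k\<in>blockA n. w k * \<kappa> k)"
    unfolding w_def
    by (subst Bochner_Integration.integral_sum) (auto intro: aa_int dest: blockA_ge1[OF _ n])
  finally show ?thesis .
qed

lemma int2:
  assumes n1: "1 \<le> n1" and n2: "1 \<le> n2" and C: "\<And>i j. 0 \<le> C i j"
  shows "(\<integral>\<^sup>+x. \<integral>\<^sup>+y. ennreal (\<Sum>i\<in>blockA n1. \<Sum>j\<in>blockA n2. aa i x * aa j y * C i j) \<partial>lborel \<partial>lborel)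
        = ennreal (\<Sum>i\<in>blockA n1. \<Sum>j\<in>blockA n2. w i * w j * C i j)"
proof -
  have inner: "(\<integral>\<^sup>+y. ennreal (\<Sum>i\<in>blockA n1. \<Sum>j\<in>blockA n2. aa i x * aa j y * C i j) \<partial>lborel)
      = ennreal (\<Sum>i\<in>blockA n1. aa i x * (\<Sum>j\<in>blockA n2. w j * C i j))" for x
  proof -
    have "(\<Sum>i\<in>blockA n1. \<Sum>j\<in>blockA n2. aa i x * aa j y * C i j) = (\<Sum>j\<in>blockA n2. aa j y * (\<Sum>i\<in>blockA n1. aa i x * C i j))" for y
      apply (simp only: sum_distrib_left)
      apply (subst sum.swap)
      apply (simp add: mult_ac)
      done
    then have "(\<integral>\<^sup>+y. ennreal (\<Sum>i\<in>blockA n1. \<Sum>j\<in>blockA n2. aa i x * aa j y * C i j) \<partial>lborel)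
        = (\<integral>\<^sup>+y. ennreal (\<Sum>j\<in>blockA n2. aa j y * (\<Sum>i\<in>blockA n1. aa i x * C i j)) \<partial>lborel)" by simp
    also have "\<dots> = ennreal (\<Sum>j\<in>blockA n2. w j * (\<Sum>i\<in>blockA n1. aa i x * C i j))"
      by (rule nn_sum_aa[OF n2]) (use aa_nonneg C blockA_ge1[OF _ n1] in \<open>auto intro!: sum_nonneg mult_nonneg_nonneg\<close>)
    also have "(\<Sum>j\<in>blockA n2. w j * (\<Sum>i\<in>blockA n1. aa i x * C i j)) = (\<Sum>i\<in>blockA n1. aa i x * (\<Sum>j\<in>blockA n2. w j * C i j))"
      apply (simp only: sum_distrib_left)
      apply (subst sum.swap)
      apply (simp add: mult_ac)
      done
    finally show ?thesis .
  qed
  have "(\<integral>\<^sup>+x. \<integral>\<^sup>+y. ennreal (\<Sum>i\<in>blockA n1. \<Sum>j\<in>blockA n2. aa i x * aa j y * C i j) \<partial>lborel \<partial>lborel)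
     = (\<integral>\<^sup>+x. ennreal (\<Sum>i\<in>blockA n1. aa i x * (\<Sum>j\<in>blockA n2. w j * C i j)) \<partial>lborel)"
    by (simp only: inner)
  also have "\<dots> = ennreal (\<Sum>i\<in>blockA n1. w i * (\<Sum>j\<in>blockA n2. w j * C i j))"
    by (rule nn_sum_aa[OF n1]) (use w_nonneg C blockA_ge1[OF _ n2] in \<open>auto intro!: sum_nonneg mult_nonneg_nonneg\<close>)
  also have "(\<Sum>i\<in>blockA n1. w i * (\<Sum>j\<in>blockA n2. w j * C i j)) = (\<Sum>i\<in>blockA n1. \<Sum>j\<in>blockA n2. w i * w j * C i j)"
    by (simp add: sum_distrib_left mult_ac)
  finally show ?thesis .
qed

lemma muA_mass:
  assumes n: "1 \<le> n"
  shows "emeasure (muA c l f n) (Vset c l n) = ennreal (Mw n)"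
proof -
  have dm: "(\<lambda>x. ennreal (densA c l f n x)) \<in> borel_measurable lborel"
    unfolding densA_eq by measurable
  have Vs: "Vset c l n \<in> sets lborel" using Vset_open by simp
  have "emeasure (muA c l f n) (Vset c l n) = (\<integral>\<^sup>+x. ennreal (densA c l f n x) * indicator (Vset c l n) x \<partial>lborel)"
    unfolding muA_def by (rule emeasure_density[OF dm Vs])
  also have "\<dots> = (\<integral>\<^sup>+x. ennreal (\<Sum>k\<in>blockA n. aa k x * (1 / real (card (blockA n)))) \<partial>lborel)"
  proof (rule nn_integral_cong)
    fix x
    have d1: "densA c l f n x * indicator (Vset c l n) x = densA c l f n x"
    proof (cases "x \<in> Vset c l n")
      case False
      then have "aa k x = 0" if "k \<in> blockA n" for k using aa_nz[of k x] that unfolding Vset_def by auto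
      then show ?thesis unfolding densA_eq by simp
    qed simp
    have d2: "ennreal (densA c l f n x) * indicator (Vset c l n) x = ennreal (densA c l f n x * indicator (Vset c l n) x)"
      by (simp add: indicator_def)
    have d3: "densA c l f n x = (\<Sum>k\<in>blockA n. aa k x * (1 / real (card (blockA n))))"
      unfolding densA_eq by (simp add: sum_distrib_left mult_ac)
    show "ennreal (densA c l f n x) * indicator (Vset c l n) x = ennreal (\<Sum>k\<in>blockA n. aa k x * (1 / real (card (blockA n))))"
      by (subst d2, subst d1, subst d3, rule refl)
  qed
  also have "\<dots> = ennreal (\<Sum>k\<in>blockA n. w k * (1 / real (card (blockA n))))"
    by (rule nn_sum_aa[OF n]) simp
  also have "\<dots> = ennreal (Mw n)" unfolding Mw_def by (simp add: sum_distrib_left mult_ac)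
  finally show ?thesis .
qed

lemma muhat_eq:
  assumes n: "1 \<le> n" and W: "0 < Wn n"
  shows "muhat c l f n = density lborel (\<lambda>x. ennreal (hn n x))"
  unfolding muhat_def
proof (rule arg_cong[where f="density lborel"], rule ext)
  fix x
  have cp: "0 < real (card (blockA n))" using n by (simp add: card_blockA)
  have Mp: "0 < Mw n" using W cp by (simp add: Mw_Wn)
  have dn: "0 \<le> densA c l f n x" unfolding densA_eq using aa_nonneg blockA_ge1[OF _ n]
    by (intro mult_nonneg_nonneg sum_nonneg) auto
  have "ennreal (densA c l f n x) / emeasure (muA c l f n) (Vset c l n) = ennreal (densA c l f n x / Mw n)"
    unfolding muA_mass[OF n] by (rule divide_ennreal[OF dn Mp])
  also have "densA c l f n x / Mw n = hn n x"
    unfolding densA_eq hn_def Mw_Wn using cp by (simp add: field_simps)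
  finally show "ennreal (densA c l f n x) / emeasure (muA c l f n) (Vset c l n) = ennreal (hn n x)" .
qed

lemma hn_nonneg: "1 \<le> n \<Longrightarrow> 0 < Wn n \<Longrightarrow> 0 \<le> hn n x"
  unfolding hn_def using aa_nonneg blockA_ge1
  by (intro divide_nonneg_pos sum_nonneg) auto

lemma hn_meas[measurable]: "hn n \<in> borel_measurable borel"
  unfolding hn_def by measurable

lemma energy_eq:
  assumes n1: "1 \<le> n1" "0 < Wn n1" and n2: "1 \<le> n2" "0 < Wn n2"
  shows "log_energy (muhat c l f n1) (muhat c l f n2) =
     (\<integral>\<^sup>+x. \<integral>\<^sup>+y. ennreal (hn n1 x * (hn n2 y * - ln \<bar>x - y\<bar>)) \<partial>lborel \<partial>lborel)"
proof -
  have Km: "(\<lambda>y. ennreal (- ln \<bar>x - y\<bar>)) \<in> borel_measurable lborel" for x :: real by measurable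
  have inner: "(\<integral>\<^sup>+ w. ennreal (- ln \<bar>z - w\<bar>) \<partial>muhat c l f n2) = (\<integral>\<^sup>+ w. ennreal (hn n2 w) * ennreal (- ln \<bar>z - w\<bar>) \<partial>lborel)" for z
    unfolding muhat_eq[OF n2] by (rule nn_integral_density) (auto intro: Km)
  have im: "(\<lambda>z. \<integral>\<^sup>+ w. ennreal (hn n2 w) * ennreal (- ln \<bar>z - w\<bar>) \<partial>lborel) \<in> borel_measurable lborel"
  proof -
    have "(\<lambda>p::real\<times>real. ennreal (hn n2 (snd p)) * ennreal (- ln \<bar>fst p - snd p\<bar>)) \<in> borel_measurable (lborel \<Otimes>\<^sub>M lborel)"
      by measurable
    then have "case_prod (\<lambda>z w. ennreal (hn n2 w) * ennreal (- ln \<bar>z - w\<bar>)) \<in> borel_measurable (lborel \<Otimes>\<^sub>M lborel)"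
      by (simp add: case_prod_beta')
    then show ?thesis by (rule lborel.borel_measurable_nn_integral)
  qed
  have "log_energy (muhat c l f n1) (muhat c l f n2) = (\<integral>\<^sup>+ z. (\<integral>\<^sup>+ w. ennreal (hn n2 w) * ennreal (- ln \<bar>z - w\<bar>) \<partial>lborel) \<partial>muhat c l f n1)"
    unfolding log_energy_def by (simp only: inner)
  also have "\<dots> = (\<integral>\<^sup>+ z. ennreal (hn n1 z) * (\<integral>\<^sup>+ w. ennreal (hn n2 w) * ennreal (- ln \<bar>z - w\<bar>) \<partial>lborel) \<partial>lborel)"
    unfolding muhat_eq[OF n1] by (rule nn_integral_density) (auto intro: im)
  also have "\<dots> = (\<integral>\<^sup>+x. \<integral>\<^sup>+y. ennreal (hn n1 x * (hn n2 y * - ln \<bar>x - y\<bar>)) \<partial>lborel \<partial>lborel)"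
  proof (rule nn_integral_cong)
    fix x
    have "ennreal (hn n1 x) * (\<integral>\<^sup>+ w. ennreal (hn n2 w) * ennreal (- ln \<bar>x - w\<bar>) \<partial>lborel) =
          (\<integral>\<^sup>+ w. ennreal (hn n1 x) * (ennreal (hn n2 w) * ennreal (- ln \<bar>x - w\<bar>)) \<partial>lborel)"
      by (rule nn_integral_cmult[symmetric]) measurable
    also have "\<dots> = (\<integral>\<^sup>+y. ennreal (hn n1 x * (hn n2 y * - ln \<bar>x - y\<bar>)) \<partial>lborel)"
    proof (rule nn_integral_cong)
      fix y
      have ha: "0 \<le> hn n1 x" by (rule hn_nonneg[OF n1])
      have hb: "0 \<le> hn n2 y" by (rule hn_nonneg[OF n2])
      show "ennreal (hn n1 x) * (ennreal (hn n2 y) * ennreal (- ln \<bar>x - y\<bar>)) = ennreal (hn n1 x * (hn n2 y * - ln \<bar>x - y\<bar>))"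
        by (subst ennreal_mult'[OF hb, symmetric], subst ennreal_mult'[OF ha, symmetric], rule refl)
    qed
    finally show "ennreal (hn n1 x) * (\<integral>\<^sup>+ w. ennreal (hn n2 w) * ennreal (- ln \<bar>x - w\<bar>) \<partial>lborel) =
          (\<integral>\<^sup>+y. ennreal (hn n1 x * (hn n2 y * - ln \<bar>x - y\<bar>)) \<partial>lborel)" .
  qed
  finally show ?thesis .
qed

lemma hn_prod:
  "hn n1 x * (hn n2 y * K) = (\<Sum>i\<in>blockA n1. \<Sum>j\<in>blockA n2. aa i x * aa j y * (K / (Wn n1 * Wn n2)))"
proof -
  have "hn n1 x * (hn n2 y * K) = ((\<Sum>i\<in>blockA n1. aa i x) * (\<Sum>j\<in>blockA n2. aa j y)) * (K / (Wn n1 * Wn n2))"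
    unfolding hn_def by simp
  also have "\<dots> = (\<Sum>i\<in>blockA n1. \<Sum>j\<in>blockA n2. aa i x * aa j y) * (K / (Wn n1 * Wn n2))"
    by (simp only: sum_product)
  also have "\<dots> = (\<Sum>i\<in>blockA n1. \<Sum>j\<in>blockA n2. aa i x * aa j y * (K / (Wn n1 * Wn n2)))"
    by (simp only: sum_distrib_right)
  finally show ?thesis .
qed

lemma energy_bounds:
  assumes n1: "1 \<le> n1" "0 < Wn n1" and n2: "1 \<le> n2" "0 < Wn n2"
    and e: "0 < e" "e \<le> 1/2"
    and sep: "\<forall>i\<in>blockA n1. \<forall>j\<in>blockA n2. l i + l j < e * (2 * \<bar>c i - c j\<bar>)"
  shows "ennreal (mainT n1 n2 - e) \<le> log_energy (muhat c l f n1) (muhat c l f n2)"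
    and "log_energy (muhat c l f n1) (muhat c l f n2) \<le> ennreal (mainT n1 n2 + 2 * e)"
proof -
  have WW: "0 < Wn n1 * Wn n2" using n1 n2 by simp
  have ww: "(\<Sum>i\<in>blockA n1. \<Sum>j\<in>blockA n2. w i * w j) = Wn n1 * Wn n2"
    unfolding Wn_def by (simp add: sum_product)
  define Cu where "Cu i j = (Ln i j + 2 * e) / (Wn n1 * Wn n2)" for i j
  define Cl where "Cl i j = max 0 (Ln i j - e) / (Wn n1 * Wn n2)" for i j
  have ptw: "aa i x * aa j y * Cl i j \<le> aa i x * aa j y * (- ln \<bar>x - y\<bar> / (Wn n1 * Wn n2)) \<and>
             aa i x * aa j y * (- ln \<bar>x - y\<bar> / (Wn n1 * Wn n2)) \<le> aa i x * aa j y * Cu i j"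
    if i: "i \<in> blockA n1" and j: "j \<in> blockA n2" for i j x y
  proof (cases "aa i x = 0 \<or> aa j y = 0")
    case True then show ?thesis by auto
  next
    case False
    then have xi: "x \<in> interv c l i" "x \<in> {0..1}" and yj: "y \<in> interv c l j" "y \<in> {0..1}"
      using aa_nz by blast+
    have xc: "\<bar>x - c i\<bar> < l i / 2" using xi unfolding interv_def abs_less_iff by auto
    have yc: "\<bar>y - c j\<bar> < l j / 2" using yj unfolding interv_def abs_less_iff by auto
    have lb: "- ln \<bar>c i - c j\<bar> - e \<le> - ln \<bar>x - y\<bar>" and ub: "- ln \<bar>x - y\<bar> \<le> - ln \<bar>c i - c j\<bar> + 2 * e"
      using logbound[OF xc yc e] sep i j by auto
    have xy1: "\<bar>x - y\<bar> \<le> 1" using xi yj by auto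
    have lnn: "0 \<le> - ln \<bar>x - y\<bar>" by (rule neg_ln_nonneg) (use xy1 in auto)
    have aap: "0 \<le> aa i x * aa j y" using aa_nonneg blockA_ge1 i j n1 n2 by auto
    have c1: "Cl i j \<le> - ln \<bar>x - y\<bar> / (Wn n1 * Wn n2)"
      unfolding Cl_def Ln_def using lb lnn WW by (intro divide_right_mono) auto
    have c2: "- ln \<bar>x - y\<bar> / (Wn n1 * Wn n2) \<le> Cu i j"
      unfolding Cu_def Ln_def using ub WW by (intro divide_right_mono) auto
    show ?thesis using mult_left_mono[OF c1 aap] mult_left_mono[OF c2 aap] by blast
  qed
  have Cu0: "0 \<le> Cu i j" if "i \<in> blockA n1" "j \<in> blockA n2" for i j
  proof -
    have "i \<noteq> j \<or> True" by simp
    have "0 \<le> Ln i j" unfolding Ln_def using cdist1[OF that n1(1) n2(1)] by (intro neg_ln_nonneg) auto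
    then show ?thesis unfolding Cu_def using e WW by simp
  qed
  define Cu' where "Cu' i j = (if i \<in> blockA n1 \<and> j \<in> blockA n2 then Cu i j else 0)" for i j
  have Cu'0: "0 \<le> Cu' i j" for i j unfolding Cu'_def using Cu0 by auto
  have Cl0: "0 \<le> Cl i j" for i j unfolding Cl_def using WW by simp
  have EE: "log_energy (muhat c l f n1) (muhat c l f n2) =
     (\<integral>\<^sup>+x. \<integral>\<^sup>+y. ennreal (\<Sum>i\<in>blockA n1. \<Sum>j\<in>blockA n2. aa i x * aa j y * (- ln \<bar>x - y\<bar> / (Wn n1 * Wn n2))) \<partial>lborel \<partial>lborel)"
    unfolding energy_eq[OF n1 n2] hn_prod ..
  have "log_energy (muhat c l f n1) (muhat c l f n2) \<le>
     (\<integral>\<^sup>+x. \<integral>\<^sup>+y. ennreal (\<Sum>i\<in>blockA n1. \<Sum>j\<in>blockA n2. aa i x * aa j y * Cu' i j) \<partial>lborel \<partial>lborel)"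
    unfolding EE
    by (intro nn_integral_mono ennreal_leI sum_mono) (use ptw in \<open>auto simp: Cu'_def\<close>)
  also have "\<dots> = ennreal (\<Sum>i\<in>blockA n1. \<Sum>j\<in>blockA n2. w i * w j * Cu' i j)"
    by (rule int2[OF n1(1) n2(1) Cu'0])
  also have "(\<Sum>i\<in>blockA n1. \<Sum>j\<in>blockA n2. w i * w j * Cu' i j) = mainT n1 n2 + 2 * e"
  proof -
    have "(\<Sum>i\<in>blockA n1. \<Sum>j\<in>blockA n2. w i * w j * Cu' i j) =
          (\<Sum>i\<in>blockA n1. \<Sum>j\<in>blockA n2. w i * w j * Ln i j / (Wn n1 * Wn n2) + (2 * e / (Wn n1 * Wn n2)) * (w i * w j))"
      by (intro sum.cong refl) (simp add: Cu'_def Cu_def add_divide_distrib distrib_left mult_ac)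
    also have "\<dots> = (\<Sum>i\<in>blockA n1. \<Sum>j\<in>blockA n2. w i * w j * Ln i j) / (Wn n1 * Wn n2) +
        (2 * e / (Wn n1 * Wn n2)) * (\<Sum>i\<in>blockA n1. \<Sum>j\<in>blockA n2. w i * w j)"
      by (simp add: sum.distrib sum_distrib_left sum_divide_distrib)
    also have "\<dots> = mainT n1 n2 + 2 * e" unfolding mainT_def ww using n1(2) n2(2) by simp
    finally show ?thesis .
  qed
  finally show "log_energy (muhat c l f n1) (muhat c l f n2) \<le> ennreal (mainT n1 n2 + 2 * e)" .
  have "ennreal (mainT n1 n2 - e) \<le> ennreal (\<Sum>i\<in>blockA n1. \<Sum>j\<in>blockA n2. w i * w j * Cl i j)"
  proof (rule ennreal_leI)
    have "mainT n1 n2 - e = (\<Sum>i\<in>blockA n1. \<Sum>j\<in>blockA n2. w i * w j * ((Ln i j - e) / (Wn n1 * Wn n2)))"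
    proof -
      have "(\<Sum>i\<in>blockA n1. \<Sum>j\<in>blockA n2. w i * w j * ((Ln i j - e) / (Wn n1 * Wn n2))) =
          (\<Sum>i\<in>blockA n1. \<Sum>j\<in>blockA n2. w i * w j * Ln i j / (Wn n1 * Wn n2) - (e / (Wn n1 * Wn n2)) * (w i * w j))"
        by (intro sum.cong refl) (simp add: diff_divide_distrib right_diff_distrib mult_ac)
      also have "\<dots> = (\<Sum>i\<in>blockA n1. \<Sum>j\<in>blockA n2. w i * w j * Ln i j) / (Wn n1 * Wn n2) -
          (e / (Wn n1 * Wn n2)) * (\<Sum>i\<in>blockA n1. \<Sum>j\<in>blockA n2. w i * w j)"
        by (simp add: sum_subtractf sum_distrib_left sum_divide_distrib)
      also have "\<dots> = mainT n1 n2 - e" unfolding mainT_def ww using n1(2) n2(2) by simp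
      finally show ?thesis by simp
    qed
    also have "\<dots> \<le> (\<Sum>i\<in>blockA n1. \<Sum>j\<in>blockA n2. w i * w j * Cl i j)"
      unfolding Cl_def using WW w_nonneg blockA_ge1 n1 n2
      by (intro sum_mono mult_left_mono divide_right_mono) (auto intro: mult_nonneg_nonneg)
    finally show "mainT n1 n2 - e \<le> (\<Sum>i\<in>blockA n1. \<Sum>j\<in>blockA n2. w i * w j * Cl i j)" .
  qed
  also have "\<dots> = (\<integral>\<^sup>+x. \<integral>\<^sup>+y. ennreal (\<Sum>i\<in>blockA n1. \<Sum>j\<in>blockA n2. aa i x * aa j y * Cl i j) \<partial>lborel \<partial>lborel)"
    by (rule int2[OF n1(1) n2(1) Cl0, symmetric])
  also have "\<dots> \<le> log_energy (muhat c l f n1) (muhat c l f n2)"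
    unfolding EE
    by (intro nn_integral_mono ennreal_leI sum_mono) (use ptw in auto)
  finally show "ennreal (mainT n1 n2 - e) \<le> log_energy (muhat c l f n1) (muhat c l f n2)" .
qed

end



lemma dist_le3: "dist (a::real, (b::real, c::real)) (A, (B, C)) \<le> \<bar>a - A\<bar> + \<bar>b - B\<bar> + \<bar>c - C\<bar>"
proof -
  have "dist (b, c) (B, C) \<le> \<bar>b - B\<bar> + \<bar>c - C\<bar>"
    unfolding dist_Pair_Pair using sqrt_sum_squares_le_sum_abs[of "dist b B" "dist c C"] by (simp add: dist_real_def)
  moreover have "dist (a, (b, c)) (A, (B, C)) \<le> \<bar>a - A\<bar> + dist (b, c) (B, C)"
    unfolding dist_Pair_Pair[of a "(b,c)"] using sqrt_sum_squares_le_sum_abs[of "dist a A" "dist (b,c) (B,C)"]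
    by (simp add: dist_real_def)
  ultimately show ?thesis by linarith
qed

lemma cont3:
  fixes A B :: real
  assumes B: "B > 0" and t: "t' > 0"
  shows "\<exists>t>0. \<forall>a b c. \<bar>a - A\<bar> < t \<and> \<bar>b - B\<bar> < t \<and> \<bar>c - B\<bar> < t \<longrightarrow> \<bar>a / (b * c) - A / (B * B)\<bar> < t'"
proof -
  define g where "g p = fst p / (fst (snd p) * snd (snd p))" for p :: "real \<times> real \<times> real"
  have "continuous (at (A, (B, B))) g"
    unfolding g_def using B by (intro continuous_intros) auto
  then obtain d where d: "d > 0" "\<forall>x'. dist x' (A, (B, B)) < d \<longrightarrow> dist (g x') (g (A, (B, B))) < t'"
    unfolding continuous_at_eps_delta using t by blast
  show ?thesis
  proof (intro exI[of _ "d / 3"] conjI allI impI)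
    show "0 < d / 3" using d by simp
    fix a b c assume abc: "\<bar>a - A\<bar> < d / 3 \<and> \<bar>b - B\<bar> < d / 3 \<and> \<bar>c - B\<bar> < d / 3"
    have "dist (a, (b, c)) (A, (B, B)) < d" using dist_le3[of a b c A B B] abc by linarith
    then have "dist (g (a, (b, c))) (g (A, (B, B))) < t'" using d by blast
    then show "\<bar>a / (b * c) - A / (B * B)\<bar> < t'" unfolding g_def by (simp add: dist_real_def)
  qed
qed

context Lset begin

definition SS :: "nat \<Rightarrow> nat \<Rightarrow> real" where
  "SS n1 n2 = (1 / (real (card (blockA n1)) * real (card (blockA n2)))) *
      (\<Sum>i\<in>blockA n1. \<Sum>j\<in>blockA n2. w i * w j * Ln i j)"

lemma mainT_SS:
  assumes "1 \<le> n1" "1 \<le> n2"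
  shows "mainT n1 n2 = SS n1 n2 / (Mw n1 * Mw n2)"
  unfolding mainT_def SS_def Mw_Wn using assms by (simp add: card_blockA field_simps)

lemma LK_le_B: "LK k p \<le> - ln (eta k)"
  unfolding LK_def using LK_arg_pos[of p k] eta_pos[of k] eta_le1[of k] by (simp add: ln_le_cancel_iff)

lemma SS_D:
  assumes n1: "1 \<le> n1" and n2: "1 \<le> n2"
    and dist: "\<forall>i\<in>blockA n1. \<forall>j\<in>blockA n2. i \<noteq> j \<and> c i \<noteq> c j"
  shows "\<bar>SS n1 n2 - D n1 n2 (GK k0)\<bar> \<le> - ln (eta k0) * FB * (dev n1 + dev n2) + FB * FB * A2S n1 n2 (eta k0)"
proof -
  define B where "B = - ln (eta k0)"
  define R where "R i j = (if i \<noteq> j \<and> \<bar>c i - c j\<bar> < eta k0 then Ln i j else 0)" for i j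
  have tm: "\<bar>w i * w j * Ln i j - GK k0 (c i, c j)\<bar> \<le> B * FB * \<bar>w i - ff (c i)\<bar> + B * FB * \<bar>w j - ff (c j)\<bar> + FB * FB * R i j"
    if i: "i \<in> blockA n1" and j: "j \<in> blockA n2" for i j
  proof -
    have i1: "1 \<le> i" using blockA_ge1[OF i n1] .
    have j1: "1 \<le> j" using blockA_ge1[OF j n2] .
    have ij: "i \<noteq> j" "c i \<noteq> c j" using dist i j by auto
    have d1: "\<bar>c i - c j\<bar> \<le> 1" using cdist1[OF i j n1 n2] .
    define K where "K = LK k0 (c i, c j)"
    have K0: "0 \<le> K" unfolding K_def by (rule LK_nonneg)
    have KB: "K \<le> B" unfolding K_def B_def by (rule LK_le_B)
    have KL: "K \<le> Ln i j" unfolding K_def Ln_def by (rule LK_le_log) (use ij d1 in auto)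
    have LR: "Ln i j - K \<le> R i j"
    proof (cases "\<bar>c i - c j\<bar> < eta k0")
      case True then show ?thesis unfolding R_def using ij K0 by simp
    next
      case False
      then have "K = Ln i j" unfolding K_def Ln_def by (intro LK_eq_log) (use d1 in auto)
      then show ?thesis unfolding R_def using False by simp
    qed
    have wi: "0 \<le> w i" "w i \<le> FB" using w_nonneg[OF i1] w_le[OF i1] by auto
    have wj: "0 \<le> w j" "w j \<le> FB" using w_nonneg[OF j1] w_le[OF j1] by auto
    have fi: "0 \<le> ff (c i)" "ff (c i) \<le> FB" using ff_pos[of "c i"] FB_Fm(2)[of "c i"] by auto
    have fj: "0 \<le> ff (c j)" "ff (c j) \<le> FB" using ff_pos[of "c j"] FB_Fm(2)[of "c j"] by auto
    have eq: "w i * w j * Ln i j - GK k0 (c i, c j) =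
        (w i * (w j - ff (c j)) + ff (c j) * (w i - ff (c i))) * K + w i * w j * (Ln i j - K)"
      unfolding GK_def K_def by (simp add: algebra_simps)
    have a1: "\<bar>w i * (w j - ff (c j))\<bar> \<le> FB * \<bar>w j - ff (c j)\<bar>"
      using wi by (simp add: abs_mult mult_right_mono)
    have a2: "\<bar>ff (c j) * (w i - ff (c i))\<bar> \<le> FB * \<bar>w i - ff (c i)\<bar>"
      using fj by (simp add: abs_mult mult_right_mono)
    have "\<bar>(w i * (w j - ff (c j)) + ff (c j) * (w i - ff (c i))) * K\<bar> \<le> (FB * \<bar>w j - ff (c j)\<bar> + FB * \<bar>w i - ff (c i)\<bar>) * B"
    proof -
      have "\<bar>(w i * (w j - ff (c j)) + ff (c j) * (w i - ff (c i))) * K\<bar> = \<bar>w i * (w j - ff (c j)) + ff (c j) * (w i - ff (c i))\<bar> * K"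
        using K0 by (simp add: abs_mult)
      also have "\<dots> \<le> (FB * \<bar>w j - ff (c j)\<bar> + FB * \<bar>w i - ff (c i)\<bar>) * K"
        using a1 a2 K0 abs_triangle_ineq[of "w i * (w j - ff (c j))" "ff (c j) * (w i - ff (c i))"]
        by (intro mult_right_mono) auto
      also have "\<dots> \<le> (FB * \<bar>w j - ff (c j)\<bar> + FB * \<bar>w i - ff (c i)\<bar>) * B"
        using KB FB_pos by (intro mult_left_mono) auto
      finally show ?thesis .
    qed
    moreover have "\<bar>w i * w j * (Ln i j - K)\<bar> \<le> FB * FB * R i j"
    proof -
      have "0 \<le> Ln i j - K" using KL by simp
      then have "\<bar>w i * w j * (Ln i j - K)\<bar> = w i * w j * (Ln i j - K)" using wi wj by simp
      also have "\<dots> \<le> FB * FB * R i j"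
        using wi wj LR \<open>0 \<le> Ln i j - K\<close> by (intro mult_mono) (auto intro: mult_mono)
      finally show ?thesis .
    qed
    ultimately show ?thesis unfolding eq using abs_triangle_ineq by (simp add: algebra_simps)
  qed
  have cp1: "0 < real (card (blockA n1))" and cp2: "0 < real (card (blockA n2))"
    using n1 n2 by (auto simp: card_blockA)
  define C where "C = 1 / (real (card (blockA n1)) * real (card (blockA n2)))"
  have C0: "0 \<le> C" unfolding C_def by simp
  have "SS n1 n2 - D n1 n2 (GK k0) = C * (\<Sum>i\<in>blockA n1. \<Sum>j\<in>blockA n2. w i * w j * Ln i j - GK k0 (c i, c j))"
    unfolding SS_def D_def C_def by (simp add: sum_subtractf right_diff_distrib)
  then have "\<bar>SS n1 n2 - D n1 n2 (GK k0)\<bar> = C * \<bar>\<Sum>i\<in>blockA n1. \<Sum>j\<in>blockA n2. w i * w j * Ln i j - GK k0 (c i, c j)\<bar>"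
    using C0 by (simp add: abs_mult)
  also have "\<dots> \<le> C * (\<Sum>i\<in>blockA n1. \<Sum>j\<in>blockA n2. B * FB * \<bar>w i - ff (c i)\<bar> + B * FB * \<bar>w j - ff (c j)\<bar> + FB * FB * R i j)"
  proof (rule mult_left_mono[OF _ C0])
    have "\<bar>\<Sum>i\<in>blockA n1. \<Sum>j\<in>blockA n2. w i * w j * Ln i j - GK k0 (c i, c j)\<bar>
        \<le> (\<Sum>i\<in>blockA n1. \<bar>\<Sum>j\<in>blockA n2. w i * w j * Ln i j - GK k0 (c i, c j)\<bar>)" by (rule sum_abs)
    also have "\<dots> \<le> (\<Sum>i\<in>blockA n1. \<Sum>j\<in>blockA n2. \<bar>w i * w j * Ln i j - GK k0 (c i, c j)\<bar>)"
      by (intro sum_mono sum_abs)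
    also have "\<dots> \<le> (\<Sum>i\<in>blockA n1. \<Sum>j\<in>blockA n2. B * FB * \<bar>w i - ff (c i)\<bar> + B * FB * \<bar>w j - ff (c j)\<bar> + FB * FB * R i j)"
      by (intro sum_mono tm)
    finally show "\<bar>\<Sum>i\<in>blockA n1. \<Sum>j\<in>blockA n2. w i * w j * Ln i j - GK k0 (c i, c j)\<bar>
        \<le> (\<Sum>i\<in>blockA n1. \<Sum>j\<in>blockA n2. B * FB * \<bar>w i - ff (c i)\<bar> + B * FB * \<bar>w j - ff (c j)\<bar> + FB * FB * R i j)" .
  qed
  also have "\<dots> = B * FB * (C * (\<Sum>i\<in>blockA n1. \<Sum>j\<in>blockA n2. \<bar>w i - ff (c i)\<bar>))
      + B * FB * (C * (\<Sum>i\<in>blockA n1. \<Sum>j\<in>blockA n2. \<bar>w j - ff (c j)\<bar>))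
      + FB * FB * (C * (\<Sum>i\<in>blockA n1. \<Sum>j\<in>blockA n2. R i j))"
    by (simp add: sum.distrib sum_distrib_left distrib_left mult_ac)
  also have "C * (\<Sum>i\<in>blockA n1. \<Sum>j\<in>blockA n2. \<bar>w i - ff (c i)\<bar>) = dev n1"
  proof -
    have "n2 \<in> blockA n2" using n2 by (simp add: blockA_def)
    then have "blockA n2 \<noteq> {}" by blast
    then show ?thesis unfolding C_def dev_def using cp2 by (simp add: sum_distrib_left)
  qed
  also have "C * (\<Sum>i\<in>blockA n1. \<Sum>j\<in>blockA n2. \<bar>w j - ff (c j)\<bar>) = dev n2"
  proof -
    have "n1 \<in> blockA n1" using n1 by (simp add: blockA_def)
    then have "blockA n1 \<noteq> {}" by blast
    then show ?thesis unfolding C_def dev_def using cp1 by (subst sum.swap) (simp add: sum_distrib_left)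
  qed
  also have "C * (\<Sum>i\<in>blockA n1. \<Sum>j\<in>blockA n2. R i j) = A2S n1 n2 (eta k0)"
  proof -
    have "(\<Sum>i\<in>blockA n1. \<Sum>j\<in>blockA n2. R i j) = (\<Sum>i\<in>blockA n1. \<Sum>j\<in>{j\<in>blockA n2. i \<noteq> j \<and> \<bar>c i - c j\<bar> < eta k0}. - ln \<bar>c i - c j\<bar>)"
      unfolding R_def Ln_def by (simp only: sum.inter_filter[OF finite_blockA])
    then show ?thesis unfolding C_def A2S_def card_cartesian_product by simp
  qed
  finally show ?thesis unfolding B_def by (simp add: algebra_simps)
qed

lemma blocks_disj:
  assumes "s \<noteq> t" "i \<in> blockA (2^s * m)" "j \<in> blockA (2^t * m)"
  shows "i \<noteq> j"
proof
  assume ij: "i = j"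
  have "s < t \<or> t < s" using assms(1) by auto
  then show False
  proof
    assume st: "s < t"
    then have "2^(s+1) \<le> (2::nat)^t" by (intro power_increasing) auto
    then have "2^(s+1) * m \<le> 2^t * m" by (rule mult_le_mono1)
    moreover have "2^(s+1) * m = 2 * (2^s * m)" by simp
    ultimately have X: "2 * (2^s * m) \<le> 2^t * m" by linarith
    have "j < 2 * (2^s * m)" "2^t * m \<le> j" using assms(2,3) ij unfolding blockA_def by auto
    then show False using X by linarith
  next
    assume st: "t < s"
    then have "2^(t+1) \<le> (2::nat)^s" by (intro power_increasing) auto
    then have "2^(t+1) * m \<le> 2^s * m" by (rule mult_le_mono1)
    moreover have "2^(t+1) * m = 2 * (2^t * m)" by simp
    ultimately have X: "2 * (2^t * m) \<le> 2^s * m" by linarith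
    have "j < 2 * (2^t * m)" "2^s * m \<le> j" using assms(2,3) ij unfolding blockA_def by auto
    then show False using X by linarith
  qed
qed

lemma SS_close:
  assumes tau: "\<tau> > 0" and I0r: "I0 = ennreal I0r" "\<forall>k. J (GK k) \<le> I0r"
    "\<forall>\<epsilon>>0. \<exists>K. \<forall>k\<ge>K. A2P k \<epsilon> \<and> I0r \<le> J (GK k) + FB * FB * \<epsilon>"
  shows "\<forall>\<^sub>F m in sequentially. \<forall>s<q m. \<forall>t<q m. s \<noteq> t \<longrightarrow> \<bar>SS (2^s*m) (2^t*m) - I0r\<bar> < \<tau>"
proof -
  define \<epsilon> where "\<epsilon> = \<tau> / (3 + 2 * FB * FB)"
  have e: "\<epsilon> > 0" unfolding \<epsilon>_def using tau FB_pos by (simp add: add_pos_nonneg)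
  obtain k0 where k0: "A2P k0 \<epsilon>" "I0r \<le> J (GK k0) + FB * FB * \<epsilon>" using I0r(3) e by blast
  define B where "B = - ln (eta k0)"
  have B0: "0 \<le> B" unfolding B_def using eta_pos[of k0] eta_le1[of k0] by (intro neg_ln_nonneg) auto
  define e2 where "e2 = \<epsilon> / (2 * B * FB + 1)"
  have e2: "e2 > 0" unfolding e2_def using e B0 FB_pos by (simp add: add_nonneg_pos)
  obtain N where N: "\<forall>n1\<ge>N. \<forall>n2\<ge>N. \<bar>D n1 n2 (GK k0) - J (GK k0)\<bar> < \<epsilon>"
    using Q_cont_ev[OF GK_cont e] by blast
  have evdev: "\<forall>\<^sub>F n in sequentially. \<bar>dev n\<bar> < e2"
    using dev_lim e2 unfolding tendsto_iff dist_real_def by simp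
  then obtain N' where N': "\<forall>n\<ge>N'. \<bar>dev n\<bar> < e2" unfolding eventually_sequentially by blast
  have ev: "\<forall>\<^sub>F m in sequentially. (\<forall>a\<le>q m. \<forall>b\<le>q m. A2S (2^a*m) (2^b*m) (eta k0) < \<epsilon>) \<and>
       (\<forall>i\<in>blockAq m (q m). \<forall>j\<in>blockAq m (q m). i \<noteq> j \<longrightarrow> c i \<noteq> c j) \<and> max (max N N') 1 \<le> m"
  proof (intro eventually_conj)
    show "\<forall>\<^sub>F m in sequentially. \<forall>a\<le>q m. \<forall>b\<le>q m. A2S (2^a*m) (2^b*m) (eta k0) < \<epsilon>"
      using k0(1) unfolding A2P_def .
    show "\<forall>\<^sub>F m in sequentially. \<forall>i\<in>blockAq m (q m). \<forall>j\<in>blockAq m (q m). i \<noteq> j \<longrightarrow> c i \<noteq> c j"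
      by (rule A3_distinct)
    show "\<forall>\<^sub>F m in sequentially. max (max N N') 1 \<le> m" by (rule eventually_ge_at_top)
  qed
  then show ?thesis
  proof eventually_elim
    case (elim m)
    show ?case
    proof (intro allI impI)
      fix s t assume s: "s < q m" and t: "t < q m" and st: "s \<noteq> t"
      define n1 where "n1 = 2^s * m"
      define n2 where "n2 = 2^t * m"
      have m1: "1 \<le> m" "N \<le> m" "N' \<le> m" using elim by auto
      have mn: "m \<le> n1" "m \<le> n2" unfolding n1_def n2_def by simp_all
      have n1: "1 \<le> n1" and n2: "1 \<le> n2" using m1 mn by auto
      have dist: "\<forall>i\<in>blockA n1. \<forall>j\<in>blockA n2. i \<noteq> j \<and> c i \<noteq> c j"
      proof (intro ballI conjI)
        fix i j assume i: "i \<in> blockA n1" and j: "j \<in> blockA n2"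
        show ij: "i \<noteq> j" using blocks_disj[OF st] i j unfolding n1_def n2_def by blast
        have "i \<in> blockAq m (q m)" "j \<in> blockAq m (q m)"
          using blockA_in_q[of s m] blockA_in_q[of t m] s t i j unfolding n1_def n2_def by auto
        then show "c i \<noteq> c j" using elim ij by blast
      qed
      have A2b: "A2S n1 n2 (eta k0) < \<epsilon>" using elim s t unfolding n1_def n2_def by auto
      have sd: "\<bar>SS n1 n2 - D n1 n2 (GK k0)\<bar> \<le> B * FB * (dev n1 + dev n2) + FB * FB * A2S n1 n2 (eta k0)"
        using SS_D[OF n1 n2 dist, of k0] unfolding B_def .
      have dv: "\<bar>dev n1\<bar> < e2" "\<bar>dev n2\<bar> < e2" using N' m1 mn by auto
      have "B * FB * (dev n1 + dev n2) \<le> B * FB * (2 * e2)"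
        using dv B0 FB_pos by (intro mult_left_mono) auto
      also have "\<dots> \<le> \<epsilon>"
      proof -
        have "B * FB * (2 * e2) = \<epsilon> * ((2 * B * FB) / (2 * B * FB + 1))"
          unfolding e2_def by (simp add: field_simps)
        also have "\<dots> \<le> \<epsilon> * 1"
        proof -
          have "0 \<le> 2 * B * FB" using B0 FB_pos by simp
          then have "0 < 2 * B * FB + 1" by linarith
          then have "(2 * B * FB) / (2 * B * FB + 1) \<le> 1" by (simp add: divide_le_eq_1)
          then show ?thesis using e by (intro mult_left_mono) auto
        qed
        finally show ?thesis by simp
      qed
      finally have t1: "B * FB * (dev n1 + dev n2) \<le> \<epsilon>" .
      have t2: "FB * FB * A2S n1 n2 (eta k0) \<le> FB * FB * \<epsilon>"
        using A2b FB_pos by (intro mult_left_mono) auto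
      have dj: "\<bar>D n1 n2 (GK k0) - J (GK k0)\<bar> < \<epsilon>" using N m1 mn by auto
      have jl: "J (GK k0) \<le> I0r" "I0r \<le> J (GK k0) + FB * FB * \<epsilon>" using I0r(2) k0(2) by auto
      have "\<bar>SS n1 n2 - I0r\<bar> < \<epsilon> + FB * FB * \<epsilon> + \<epsilon> + FB * FB * \<epsilon>"
        using sd t1 t2 dj jl by linarith
      also have "\<dots> = \<epsilon> * (2 + 2 * FB * FB)" by (simp add: algebra_simps)
      also have "\<dots> \<le> \<epsilon> * (3 + 2 * FB * FB)" using e by simp
      also have "\<dots> = \<tau>"
      proof -
        have "0 < 3 + 2 * FB * FB" using FB_pos by (simp add: add_pos_nonneg)
        then show ?thesis unfolding \<epsilon>_def by simp
      qed
      finally show "\<bar>SS (2^s*m) (2^t*m) - I0r\<bar> < \<tau>" unfolding n1_def n2_def .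
    qed
  qed
qed

lemma Mw_close: "\<tau> > 0 \<Longrightarrow> \<forall>\<^sub>F m in sequentially. \<forall>s. \<bar>Mw (2^s*m) - Phi\<bar> < \<tau>"
proof -
  assume tau: "\<tau> > 0"
  have "\<forall>\<^sub>F n in sequentially. \<bar>Mw n - Phi\<bar> < \<tau>"
    using Mw_lim tau unfolding tendsto_iff dist_real_def by simp
  then obtain N where N: "\<forall>n\<ge>N. \<bar>Mw n - Phi\<bar> < \<tau>" unfolding eventually_sequentially by blast
  show ?thesis using eventually_ge_at_top[of N]
  proof eventually_elim
    case (elim m)
    show ?case
    proof
      fix s :: nat
      have "m \<le> 2^s * m" by simp
      then have "N \<le> 2^s * m" using elim by linarith
      then show "\<bar>Mw (2^s*m) - Phi\<bar> < \<tau>" using N by blast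
    qed
  qed
qed

end



lemma avg_bounds:
  fixes E :: "nat \<Rightarrow> nat \<Rightarrow> ennreal"
  assumes Q: "1 \<le> Q" and lo: "0 \<le> lo" and hi: "lo \<le> hi"
    and b: "\<forall>s<Q. \<forall>t<Q. s \<noteq> t \<longrightarrow> ennreal lo \<le> E s t \<and> E s t \<le> ennreal hi"
  shows "(\<Sum>s\<in>{0..<Q}. \<Sum>t\<in>{0..<Q} - {s}. E s t) / ennreal ((real (card {0..<Q}))^2) \<le> ennreal hi"
    and "ennreal (lo - lo / real Q) \<le> (\<Sum>s\<in>{0..<Q}. \<Sum>t\<in>{0..<Q} - {s}. E s t) / ennreal ((real (card {0..<Q}))^2)"
proof -
  have hi0: "0 \<le> hi" using lo hi by linarith
  have Qp: "0 < real Q" using Q by simp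
  have Qsq: "0 < (real (card {0..<Q}))^2" using Q by simp
  have cst: "(\<Sum>s\<in>{0..<Q}. \<Sum>t\<in>{0..<Q} - {s}. ennreal v) = ennreal (real Q * (real (Q - 1) * v))" if v: "0 \<le> v" for v
  proof -
    have "(\<Sum>s\<in>{0..<Q}. \<Sum>t\<in>{0..<Q} - {s}. ennreal v) = (\<Sum>s\<in>{0..<Q}. ennreal (real (Q - 1) * v))"
    proof (rule sum.cong[OF refl])
      fix s assume "s \<in> {0..<Q}"
      then have "card ({0..<Q} - {s}) = Q - 1" by simp
      then show "(\<Sum>t\<in>{0..<Q} - {s}. ennreal v) = ennreal (real (Q - 1) * v)"
        using v Q by (simp add: ennreal_of_nat_eq_real_of_nat ennreal_mult of_nat_diff)
    qed
    also have "\<dots> = ennreal (real Q * (real (Q - 1) * v))"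
      using v Q by (simp add: ennreal_of_nat_eq_real_of_nat ennreal_mult of_nat_diff)
    finally show ?thesis .
  qed
  have frac: "real Q * (real (Q - 1) * v) / (real (card {0..<Q}))^2 = v - v / real Q" for v
  proof -
    have "real (Q - 1) = real Q - 1" using Q by simp
    then show ?thesis using Qp by (simp add: power2_eq_square field_simps)
  qed
  have "(\<Sum>s\<in>{0..<Q}. \<Sum>t\<in>{0..<Q} - {s}. E s t) \<le> (\<Sum>s\<in>{0..<Q}. \<Sum>t\<in>{0..<Q} - {s}. ennreal hi)"
    using b by (intro sum_mono) auto
  also have "\<dots> = ennreal (real Q * (real (Q - 1) * hi))" by (rule cst[OF hi0])
  finally have "(\<Sum>s\<in>{0..<Q}. \<Sum>t\<in>{0..<Q} - {s}. E s t) / ennreal ((real (card {0..<Q}))^2)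
      \<le> ennreal (real Q * (real (Q - 1) * hi)) / ennreal ((real (card {0..<Q}))^2)"
    by (rule divide_right_mono_ennreal)
  also have "\<dots> = ennreal (hi - hi / real Q)"
    using divide_ennreal[OF _ Qsq, of "real Q * (real (Q - 1) * hi)"] hi0 frac by simp
  also have "\<dots> \<le> ennreal hi" using hi0 Qp by (intro ennreal_leI) simp
  finally show "(\<Sum>s\<in>{0..<Q}. \<Sum>t\<in>{0..<Q} - {s}. E s t) / ennreal ((real (card {0..<Q}))^2) \<le> ennreal hi" .
  have "ennreal (lo - lo / real Q) = ennreal (real Q * (real (Q - 1) * lo)) / ennreal ((real (card {0..<Q}))^2)"
    using divide_ennreal[OF _ Qsq, of "real Q * (real (Q - 1) * lo)"] lo frac by simp
  also have "ennreal (real Q * (real (Q - 1) * lo)) = (\<Sum>s\<in>{0..<Q}. \<Sum>t\<in>{0..<Q} - {s}. ennreal lo)"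
    by (rule cst[OF lo, symmetric])
  also have "(\<Sum>s\<in>{0..<Q}. \<Sum>t\<in>{0..<Q} - {s}. ennreal lo) / ennreal ((real (card {0..<Q}))^2)
      \<le> (\<Sum>s\<in>{0..<Q}. \<Sum>t\<in>{0..<Q} - {s}. E s t) / ennreal ((real (card {0..<Q}))^2)"
    using b by (intro divide_right_mono_ennreal sum_mono) auto
  finally show "ennreal (lo - lo / real Q) \<le> (\<Sum>s\<in>{0..<Q}. \<Sum>t\<in>{0..<Q} - {s}. E s t) / ennreal ((real (card {0..<Q}))^2)" .
qed

lemma ennreal_squeeze_lim:
  fixes X :: "nat \<Rightarrow> ennreal"
  assumes L: "0 \<le> L"
    and b: "\<And>\<tau>. \<tau> > 0 \<Longrightarrow> \<forall>\<^sub>F m in sequentially. ennreal (L - \<tau>) \<le> X m \<and> X m \<le> ennreal (L + \<tau>)"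
  shows "X \<longlonglongrightarrow> ennreal L"
proof (rule order_tendstoI)
  fix a assume a: "a < ennreal L"
  then have at: "a < top" using ennreal_less_top order.strict_trans by blast
  define a' where "a' = enn2real a"
  have aa: "a = ennreal a'" unfolding a'_def using at by simp
  have a0: "0 \<le> a'" unfolding a'_def by simp
  have al: "a' < L" using a aa a0 by (simp add: ennreal_less_iff)
  have t: "(L - a') / 2 > 0" using al by simp
  show "\<forall>\<^sub>F m in sequentially. a < X m"
    using b[OF t]
  proof eventually_elim
    case (elim m)
    have "a < ennreal (L - (L - a') / 2)" unfolding aa using a0 al by (subst ennreal_less_iff) (auto simp: field_simps)
    then show ?case using elim order_less_le_trans[of a "ennreal (L - (L - a') / 2)" "X m"] by blast
  qed
next
  fix a assume a: "ennreal L < a"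
  show "\<forall>\<^sub>F m in sequentially. X m < a"
  proof (cases "a = top")
    case True
    show ?thesis using b[OF zero_less_one]
    proof eventually_elim
      case (elim m)
      have "ennreal (L + 1) < top" by simp
      then show ?case using True elim order_le_less_trans[of "X m" "ennreal (L + 1)" top] by simp
    qed
  next
    case False
    then have at: "a < top" by (simp add: less_top)
    define a' where "a' = enn2real a"
    have aa: "a = ennreal a'" unfolding a'_def using at by simp
    have a0: "0 \<le> a'" unfolding a'_def by simp
    have al: "L < a'" using a aa L by (simp add: ennreal_less_iff)
    have t: "(a' - L) / 2 > 0" using al by simp
    show ?thesis using b[OF t]
    proof eventually_elim
      case (elim m)
      have "ennreal (L + (a' - L) / 2) < a" unfolding aa using L al by (subst ennreal_less_iff) (auto simp: field_simps)
      then show ?case using elim order_le_less_trans[of "X m" "ennreal (L + (a' - L) / 2)" a] by blast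
    qed
  qed
qed

context Lset begin

lemma Phi_pos': "0 < Phi" using Phi_pos FB_Fm(1) by linarith

lemma energy_close:
  assumes tau: "\<tau> > 0" and I0r: "I0 = ennreal I0r" "\<forall>k. J (GK k) \<le> I0r"
    "\<forall>\<epsilon>>0. \<exists>K. \<forall>k\<ge>K. A2P k \<epsilon> \<and> I0r \<le> J (GK k) + FB * FB * \<epsilon>"
  shows "\<forall>\<^sub>F m in sequentially. \<forall>s<q m. \<forall>t<q m. s \<noteq> t \<longrightarrow>
     ennreal (I0r / (Phi * Phi) - \<tau>) \<le> log_energy (muhat c l f (2^s*m)) (muhat c l f (2^t*m)) \<and>
     log_energy (muhat c l f (2^s*m)) (muhat c l f (2^t*m)) \<le> ennreal (I0r / (Phi * Phi) + \<tau>)"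
proof -
  define \<Lambda> where "\<Lambda> = I0r / (Phi * Phi)"
  have t2: "\<tau> / 2 > 0" using tau by simp
  obtain t0 where t0: "t0 > 0" "\<forall>a b c. \<bar>a - I0r\<bar> < t0 \<and> \<bar>b - Phi\<bar> < t0 \<and> \<bar>c - Phi\<bar> < t0 \<longrightarrow> \<bar>a / (b * c) - \<Lambda>\<bar> < \<tau> / 2"
    using cont3[OF Phi_pos' t2, of I0r] unfolding \<Lambda>_def by blast
  define e where "e = min (1/2) (\<tau> / 4)"
  have e: "0 < e" "e \<le> 1/2" "e \<le> \<tau> / 4" unfolding e_def using tau by auto
  define t1 where "t1 = min t0 (Phi / 2)"
  have t1: "t1 > 0" "t1 \<le> t0" "t1 \<le> Phi / 2" unfolding t1_def using t0 Phi_pos' by auto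
  have ev: "\<forall>\<^sub>F m in sequentially. (\<forall>s<q m. \<forall>t<q m. s \<noteq> t \<longrightarrow> \<bar>SS (2^s*m) (2^t*m) - I0r\<bar> < t1) \<and>
      (\<forall>s. \<bar>Mw (2^s*m) - Phi\<bar> < t1) \<and>
      (\<forall>i\<in>blockAq m (q m). \<forall>j\<in>blockAq m (q m). i \<noteq> j \<longrightarrow> l i + l j < e * (2 * \<bar>c i - c j\<bar>)) \<and> 1 \<le> m"
  proof (intro eventually_conj)
    show "\<forall>\<^sub>F m in sequentially. \<forall>s<q m. \<forall>t<q m. s \<noteq> t \<longrightarrow> \<bar>SS (2^s*m) (2^t*m) - I0r\<bar> < t1"
      by (rule SS_close[OF t1(1) I0r])
    show "\<forall>\<^sub>F m in sequentially. \<forall>s. \<bar>Mw (2^s*m) - Phi\<bar> < t1" by (rule Mw_close[OF t1(1)])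
    show "\<forall>\<^sub>F m in sequentially. \<forall>i\<in>blockAq m (q m). \<forall>j\<in>blockAq m (q m). i \<noteq> j \<longrightarrow> l i + l j < e * (2 * \<bar>c i - c j\<bar>)"
      using A3 e(1) by blast
    show "\<forall>\<^sub>F m in sequentially. 1 \<le> m" by (rule eventually_ge_at_top)
  qed
  then show ?thesis
  proof eventually_elim
    case (elim m)
    show ?case
    proof (intro allI impI)
      fix s t assume s: "s < q m" and t: "t < q m" and st: "s \<noteq> t"
      define n1 where "n1 = 2^s * m"
      define n2 where "n2 = 2^t * m"
      have n1: "1 \<le> n1" and n2: "1 \<le> n2" unfolding n1_def n2_def using elim by simp_all
      have M1: "\<bar>Mw n1 - Phi\<bar> < t1" and M2: "\<bar>Mw n2 - Phi\<bar> < t1" using elim unfolding n1_def n2_def by auto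
      have Mp1: "0 < Mw n1" and Mp2: "0 < Mw n2" using M1 M2 t1 by linarith+
      have W1: "0 < Wn n1" using Mp1 n1 by (simp add: Mw_Wn card_blockA zero_less_divide_iff)
      have W2: "0 < Wn n2" using Mp2 n2 by (simp add: Mw_Wn card_blockA zero_less_divide_iff)
      have S: "\<bar>SS n1 n2 - I0r\<bar> < t1" using elim s t st unfolding n1_def n2_def by auto
      have pre: "\<bar>SS n1 n2 - I0r\<bar> < t0 \<and> \<bar>Mw n1 - Phi\<bar> < t0 \<and> \<bar>Mw n2 - Phi\<bar> < t0"
        using S M1 M2 t1(2) by linarith
      have mT: "\<bar>mainT n1 n2 - \<Lambda>\<bar> < \<tau> / 2"
        unfolding mainT_SS[OF n1 n2] using t0(2) pre by blast
      have sep: "\<forall>i\<in>blockA n1. \<forall>j\<in>blockA n2. l i + l j < e * (2 * \<bar>c i - c j\<bar>)"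
      proof (intro ballI)
        fix i j assume i: "i \<in> blockA n1" and j: "j \<in> blockA n2"
        have ij: "i \<noteq> j" using blocks_disj[OF st] i j unfolding n1_def n2_def by blast
        have "i \<in> blockAq m (q m)" "j \<in> blockAq m (q m)"
          using blockA_in_q[of s m] blockA_in_q[of t m] s t i j unfolding n1_def n2_def by auto
        then show "l i + l j < e * (2 * \<bar>c i - c j\<bar>)" using elim ij by blast
      qed
      note eb = energy_bounds[OF n1 W1 n2 W2 e(1,2) sep]
      have "ennreal (\<Lambda> - \<tau>) \<le> ennreal (mainT n1 n2 - e)"
        using mT e by (intro ennreal_leI) linarith
      also have "\<dots> \<le> log_energy (muhat c l f n1) (muhat c l f n2)" by (rule eb(1))
      finally have lo: "ennreal (\<Lambda> - \<tau>) \<le> log_energy (muhat c l f n1) (muhat c l f n2)" .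
      have "log_energy (muhat c l f n1) (muhat c l f n2) \<le> ennreal (mainT n1 n2 + 2 * e)" by (rule eb(2))
      also have "\<dots> \<le> ennreal (\<Lambda> + \<tau>)" using mT e by (intro ennreal_leI) linarith
      finally have hi: "log_energy (muhat c l f n1) (muhat c l f n2) \<le> ennreal (\<Lambda> + \<tau>)" .
      show "ennreal (I0r / (Phi * Phi) - \<tau>) \<le> log_energy (muhat c l f (2^s*m)) (muhat c l f (2^t*m)) \<and>
         log_energy (muhat c l f (2^s*m)) (muhat c l f (2^t*m)) \<le> ennreal (I0r / (Phi * Phi) + \<tau>)"
        using lo hi unfolding n1_def n2_def \<Lambda>_def by simp
    qed
  qed
qed

lemma Phi_LINT: "(LINT x:{0..1}|lborel. f x * \<phi> x) = Phi"
proof -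
  have "(LINT x:{0..1}|lborel. f x * \<phi> x) = (\<integral>x. f x * ph x \<partial>lborel)" by (rule LINT_conv[OF f_cont])
  also have "\<dots> = Phi" unfolding Phi_def
  proof (rule Bochner_Integration.integral_cong[OF refl])
    fix x show "f x * ph x = ff x * ph x" by (cases "x \<in> {0..1}") (auto simp: ff_eq ph_out)
  qed
  finally show ?thesis .
qed

lemma I0_energy:
  "log_energy (density lborel (\<lambda>x. ennreal (f x * \<phi> x * indicator {0..1} x)))
              (density lborel (\<lambda>x. ennreal (f x * \<phi> x * indicator {0..1} x))) = I0"
proof -
  define g0 where "g0 x = ennreal (f x * \<phi> x * indicator {0..1} x)" for x
  have fm: "(\<lambda>x. indicator {0..1::real} x *\<^sub>R f x) \<in> borel_measurable borel"
    by (rule borel_measurable_continuous_on_indicator) (use f_cont in auto)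
  have g0m: "g0 \<in> borel_measurable lborel"
  proof -
    have "g0 = (\<lambda>x. ennreal ((indicator {0..1} x *\<^sub>R f x) * (indicator {0..1} x * \<phi> x)))"
      unfolding g0_def by (auto simp: indicator_def fun_eq_iff mult_ac)
    then show ?thesis using fm phi_meas by simp
  qed
  have g0ae: "AE x in lborel. g0 x = ennreal (ph x * ff x)"
    using ph_ae
  proof eventually_elim
    case (elim x)
    show ?case
    proof (cases "x \<in> {0..1}")
      case True
      then have "ph x = \<phi> x" using elim by simp
      then show ?thesis unfolding g0_def using True by (simp add: ff_eq mult_ac)
    qed (simp add: g0_def ph_out)
  qed
  have Km: "(\<lambda>w. ennreal (- ln \<bar>z - w\<bar>)) \<in> borel_measurable lborel" for z :: real by measurable
  have inner: "(\<integral>\<^sup>+ w. ennreal (- ln \<bar>z - w\<bar>) \<partial>density lborel g0) = (\<integral>\<^sup>+ w. ennreal (ph w * ff w) * ennreal (- ln \<bar>z - w\<bar>) \<partial>lborel)" for z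
  proof -
    have "(\<integral>\<^sup>+ w. ennreal (- ln \<bar>z - w\<bar>) \<partial>density lborel g0) = (\<integral>\<^sup>+ w. g0 w * ennreal (- ln \<bar>z - w\<bar>) \<partial>lborel)"
      by (rule nn_integral_density[OF g0m Km])
    also have "\<dots> = (\<integral>\<^sup>+ w. ennreal (ph w * ff w) * ennreal (- ln \<bar>z - w\<bar>) \<partial>lborel)"
      by (rule nn_integral_cong_AE) (use g0ae in \<open>auto elim: eventually_mono\<close>)
    finally show ?thesis .
  qed
  have im: "(\<lambda>z. \<integral>\<^sup>+ w. ennreal (ph w * ff w) * ennreal (- ln \<bar>z - w\<bar>) \<partial>lborel) \<in> borel_measurable lborel"
  proof -
    have "(\<lambda>p::real\<times>real. ennreal (ph (snd p) * ff (snd p)) * ennreal (- ln \<bar>fst p - snd p\<bar>)) \<in> borel_measurable (lborel \<Otimes>\<^sub>M lborel)"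
      by measurable
    then have "case_prod (\<lambda>z w. ennreal (ph w * ff w) * ennreal (- ln \<bar>z - w\<bar>)) \<in> borel_measurable (lborel \<Otimes>\<^sub>M lborel)"
      by (simp add: case_prod_beta')
    then show ?thesis by (rule lborel.borel_measurable_nn_integral)
  qed
  have "log_energy (density lborel g0) (density lborel g0) =
      (\<integral>\<^sup>+ z. (\<integral>\<^sup>+ w. ennreal (ph w * ff w) * ennreal (- ln \<bar>z - w\<bar>) \<partial>lborel) \<partial>density lborel g0)"
    unfolding log_energy_def by (simp only: inner)
  also have "\<dots> = (\<integral>\<^sup>+ z. g0 z * (\<integral>\<^sup>+ w. ennreal (ph w * ff w) * ennreal (- ln \<bar>z - w\<bar>) \<partial>lborel) \<partial>lborel)"
    by (rule nn_integral_density[OF g0m im])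
  also have "\<dots> = (\<integral>\<^sup>+ z. ennreal (ph z * ff z) * (\<integral>\<^sup>+ w. ennreal (ph w * ff w) * ennreal (- ln \<bar>z - w\<bar>) \<partial>lborel) \<partial>lborel)"
    by (rule nn_integral_cong_AE) (use g0ae in \<open>auto elim: eventually_mono\<close>)
  also have "\<dots> = I0" unfolding I0_def
  proof (rule nn_integral_cong)
    fix x
    have "ennreal (ph x * ff x) * (\<integral>\<^sup>+ w. ennreal (ph w * ff w) * ennreal (- ln \<bar>x - w\<bar>) \<partial>lborel) =
        (\<integral>\<^sup>+ w. ennreal (ph x * ff x) * (ennreal (ph w * ff w) * ennreal (- ln \<bar>x - w\<bar>)) \<partial>lborel)"
      by (rule nn_integral_cmult[symmetric]) measurable
    also have "\<dots> = (\<integral>\<^sup>+y. ennreal (ph x * ph y * (ff x * ff y * - ln \<bar>x - y\<bar>)) \<partial>lborel)"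
    proof (rule nn_integral_cong)
      fix y
      show "ennreal (ph x * ff x) * (ennreal (ph y * ff y) * ennreal (- ln \<bar>x - y\<bar>)) = ennreal (ph x * ph y * (ff x * ff y * - ln \<bar>x - y\<bar>))"
      proof (cases "x \<in> {0..1} \<and> y \<in> {0..1}")
        case True
        then have Kn: "0 \<le> - ln \<bar>x - y\<bar>" by (intro neg_ln_nonneg) auto
        have An: "0 \<le> ph x * ff x" using ph_nonneg[of x] ff_pos[of x] by simp
        have Bn: "0 \<le> ph y * ff y" using ph_nonneg[of y] ff_pos[of y] by simp
        have "ennreal (ph x * ff x) * (ennreal (ph y * ff y) * ennreal (- ln \<bar>x - y\<bar>)) =
              ennreal ((ph x * ff x) * ((ph y * ff y) * (- ln \<bar>x - y\<bar>)))"
          by (subst ennreal_mult[OF Bn Kn, symmetric], subst ennreal_mult[OF An mult_nonneg_nonneg[OF Bn Kn], symmetric], rule refl)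
        also have "(ph x * ff x) * ((ph y * ff y) * (- ln \<bar>x - y\<bar>)) = ph x * ph y * (ff x * ff y * - ln \<bar>x - y\<bar>)"
          by (simp only: mult.assoc mult.commute mult.left_commute)
        finally show ?thesis .
      next
        case False
        then have z: "ph x * ph y = 0" using ph_out by auto
        then have "ph x = 0 \<or> ph y = 0" by simp
        then show ?thesis using z by auto
      qed
    qed
    finally show "ennreal (ph x * ff x) * (\<integral>\<^sup>+ w. ennreal (ph w * ff w) * ennreal (- ln \<bar>x - w\<bar>) \<partial>lborel) =
        (\<integral>\<^sup>+y. ennreal (ph x * ph y * (ff x * ff y * - ln \<bar>x - y\<bar>)) \<partial>lborel)" .
  qed
  finally show ?thesis unfolding g0_def .
qed

lemma main_result:
  "(\<lambda>m. (\<Sum>s\<in>{0..<q m}. \<Sum>t\<in>{0..<q m} - {s}.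
            log_energy (muhat c l f (2^s*m)) (muhat c l f (2^t*m)))
          / ennreal ((real (card {0..<q m}))^2))
     \<longlonglongrightarrow> log_energy (density lborel (\<lambda>x. ennreal (f x * \<phi> x * indicator {0..1} x)))
                     (density lborel (\<lambda>x. ennreal (f x * \<phi> x * indicator {0..1} x)))
          / ennreal ((LINT x:{0..1}|lborel. f x * \<phi> x)^2)"
proof -
  obtain I0r where I0r: "0 \<le> I0r" "I0 = ennreal I0r" "\<forall>k. J (GK k) \<le> I0r"
    "\<forall>\<epsilon>>0. \<exists>K. \<forall>k\<ge>K. A2P k \<epsilon> \<and> I0r \<le> J (GK k) + FB * FB * \<epsilon>"
    using I0_approx by blast
  define \<Lambda> where "\<Lambda> = I0r / (Phi * Phi)"
  have L0: "0 \<le> \<Lambda>" unfolding \<Lambda>_def using I0r(1) by simp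
  have rhs: "log_energy (density lborel (\<lambda>x. ennreal (f x * \<phi> x * indicator {0..1} x)))
                     (density lborel (\<lambda>x. ennreal (f x * \<phi> x * indicator {0..1} x)))
          / ennreal ((LINT x:{0..1}|lborel. f x * \<phi> x)^2) = ennreal \<Lambda>"
    unfolding I0_energy Phi_LINT I0r(2) \<Lambda>_def
    using divide_ennreal[OF I0r(1), of "Phi^2"] Phi_pos' by (simp add: power2_eq_square)
  show ?thesis unfolding rhs
  proof (rule ennreal_squeeze_lim[OF L0])
    fix \<tau> :: real assume tau: "\<tau> > 0"
    have t2: "\<tau> / 2 > 0" using tau by simp
    obtain Q0 :: nat where Q0: "\<Lambda> / (\<tau> / 2) < Q0" using reals_Archimedean2 by blast
    have ev: "\<forall>\<^sub>F m in sequentially. (\<forall>s<q m. \<forall>t<q m. s \<noteq> t \<longrightarrow>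
       ennreal (\<Lambda> - \<tau> / 2) \<le> log_energy (muhat c l f (2^s*m)) (muhat c l f (2^t*m)) \<and>
       log_energy (muhat c l f (2^s*m)) (muhat c l f (2^t*m)) \<le> ennreal (\<Lambda> + \<tau> / 2)) \<and> max Q0 1 \<le> q m"
    proof (intro eventually_conj)
      show "\<forall>\<^sub>F m in sequentially. \<forall>s<q m. \<forall>t<q m. s \<noteq> t \<longrightarrow>
       ennreal (\<Lambda> - \<tau> / 2) \<le> log_energy (muhat c l f (2^s*m)) (muhat c l f (2^t*m)) \<and>
       log_energy (muhat c l f (2^s*m)) (muhat c l f (2^t*m)) \<le> ennreal (\<Lambda> + \<tau> / 2)"
        unfolding \<Lambda>_def by (rule energy_close[OF t2 I0r(2,3,4)])
      show "\<forall>\<^sub>F m in sequentially. max Q0 1 \<le> q m"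
        using q_lim unfolding filterlim_at_top by blast
    qed
    then show "\<forall>\<^sub>F m in sequentially.
        ennreal (\<Lambda> - \<tau>) \<le> (\<Sum>s\<in>{0..<q m}. \<Sum>t\<in>{0..<q m} - {s}. log_energy (muhat c l f (2^s*m)) (muhat c l f (2^t*m))) / ennreal ((real (card {0..<q m}))^2) \<and>
        (\<Sum>s\<in>{0..<q m}. \<Sum>t\<in>{0..<q m} - {s}. log_energy (muhat c l f (2^s*m)) (muhat c l f (2^t*m))) / ennreal ((real (card {0..<q m}))^2) \<le> ennreal (\<Lambda> + \<tau>)"
    proof eventually_elim
      case (elim m)
      define lo where "lo = max 0 (\<Lambda> - \<tau> / 2)"
      have Q1: "1 \<le> q m" using elim by simp
      have lo0: "0 \<le> lo" unfolding lo_def by simp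
      have lohi: "lo \<le> \<Lambda> + \<tau> / 2" unfolding lo_def using L0 tau by simp
      have b: "\<forall>s<q m. \<forall>t<q m. s \<noteq> t \<longrightarrow> ennreal lo \<le> log_energy (muhat c l f (2^s*m)) (muhat c l f (2^t*m)) \<and>
          log_energy (muhat c l f (2^s*m)) (muhat c l f (2^t*m)) \<le> ennreal (\<Lambda> + \<tau> / 2)"
      proof -
        have "ennreal lo = ennreal (\<Lambda> - \<tau> / 2)" unfolding lo_def by (simp add: max_def ennreal_neg)
        then show ?thesis using elim by simp
      qed
      note ab = avg_bounds[OF Q1 lo0 lohi b]
      have "ennreal (\<Lambda> - \<tau>) \<le> ennreal (lo - lo / real (q m))"
      proof (rule ennreal_leI)
        have qpos: "0 < real (q m)" using Q1 by simp
        have "lo \<le> \<Lambda>" unfolding lo_def using L0 tau by simp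
        then have "lo / real (q m) \<le> \<Lambda> / real (q m)" using qpos by (simp add: divide_right_mono)
        also have "\<dots> \<le> \<tau> / 2"
        proof -
          have "real Q0 \<le> real (q m)" using elim by simp
          then have "\<Lambda> / (\<tau> / 2) < real (q m)" using Q0 by linarith
          then show ?thesis using qpos t2 by (simp add: divide_le_eq field_simps)
        qed
        finally have "lo / real (q m) \<le> \<tau> / 2" .
        moreover have "\<Lambda> - \<tau> / 2 \<le> lo" unfolding lo_def by simp
        ultimately show "\<Lambda> - \<tau> \<le> lo - lo / real (q m)" by linarith
      qed
      also note ab(2)
      finally have "ennreal (\<Lambda> - \<tau>) \<le> (\<Sum>s\<in>{0..<q m}. \<Sum>t\<in>{0..<q m} - {s}. log_energy (muhat c l f (2^s*m)) (muhat c l f (2^t*m))) / ennreal ((real (card {0..<q m}))^2)" .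
      moreover have "(\<Sum>s\<in>{0..<q m}. \<Sum>t\<in>{0..<q m} - {s}. log_energy (muhat c l f (2^s*m)) (muhat c l f (2^t*m))) / ennreal ((real (card {0..<q m}))^2) \<le> ennreal (\<Lambda> + \<tau>)"
      proof -
        have "ennreal (\<Lambda> + \<tau> / 2) \<le> ennreal (\<Lambda> + \<tau>)" using tau by (intro ennreal_leI) simp
        then show ?thesis using ab(1) by (rule order_trans[rotated])
      qed
      ultimately show ?case by blast
    qed
  qed
qed

end

theorem lemma4p12:
  fixes c l :: "nat \<Rightarrow> real" and \<phi> f :: "real \<Rightarrow> real" and q :: "nat \<Rightarrow> nat"
  assumes c_in: "\<forall>k\<ge>1. c k \<in> {0<..<1}"
    and l_pos: "\<forall>k\<ge>1. l k > 0"
    and l_decr: "\<forall>k\<ge>1. l (Suc k) \<le> l k"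
    and l_lim: "l \<longlonglongrightarrow> 0"
    and A1_int: "set_integrable lborel {0..1} \<phi>"
    and A1_pos: "AE x in lborel. x \<in> {0..1} \<longrightarrow> \<phi> x > 0"
    and A1_lim: "\<forall>g. continuous_on {0..1} g \<longrightarrow>
        (\<lambda>n. (1 / real (card (blockA n))) * (\<Sum>k\<in>blockA n. g (c k)))
          \<longlonglongrightarrow> (LINT x:{0..1}|lborel. g x * \<phi> x)"
    and q_lim: "filterlim q at_top sequentially"
    and A2: "\<forall>\<epsilon>>0. \<exists>\<delta>>0. \<forall>\<^sub>F n in sequentially. \<forall>a\<le>q n. \<forall>b\<le>q n.
        (1 / real (card (blockA (2^a*n) \<times> blockA (2^b*n)))) *
        (\<Sum>i\<in>blockA (2^a*n). \<Sum>j\<in>{j\<in>blockA (2^b*n). i \<noteq> j \<and> \<bar>c i - c j\<bar> < \<delta>}.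
            - ln \<bar>c i - c j\<bar>) < \<epsilon>"
    and A3: "\<forall>\<epsilon>>0. \<forall>\<^sub>F n in sequentially. \<forall>i\<in>blockAq n (q n). \<forall>j\<in>blockAq n (q n).
        i \<noteq> j \<longrightarrow> l i + l j < \<epsilon> * (2 * \<bar>c i - c j\<bar>)"
    and f_cont: "continuous_on {0..1} f"
    and f_pos: "\<forall>x\<in>{0..1}. f x > 0"
  shows "(\<lambda>m. (\<Sum>s\<in>{0..<q m}. \<Sum>t\<in>{0..<q m} - {s}.
            log_energy (muhat c l f (2^s*m)) (muhat c l f (2^t*m)))
          / ennreal ((real (card {0..<q m}))^2))
     \<longlonglongrightarrow> log_energy (density lborel (\<lambda>x. ennreal (f x * \<phi> x * indicator {0..1} x)))
                     (density lborel (\<lambda>x. ennreal (f x * \<phi> x * indicator {0..1} x)))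
          / ennreal ((LINT x:{0..1}|lborel. f x * \<phi> x)^2)"
proof -
  interpret Lset c l \<phi> f q
    by (rule Lset.intro[OF c_in l_pos l_decr l_lim A1_int A1_pos A1_lim q_lim A2 A3 f_cont f_pos])
  show ?thesis by (rule main_result)
qed

end
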